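(* Let $F:\mathbb{R}^{n_0}\to\mathbb{R}$ be a generic, supertransversal fully-connected ReLU network with at least $n_0$ hidden units in the first layer. Identify each $\sigma\in\{-1,0,1\}^N$ with the closed face $Q_\sigma=\{x\in[-1,1]^N: x_l=\sigma_l \text{ whenever } \sigma_l\ne0\}$ of the cube $[-1,1]^N$ (with its product CW structure), of dimension equal to the number of zero entries of $\sigma$. Then the collection $\mathcal{S}(F)=\{Q_{s(C)}: C\in\mathcal{C}(F)\}$ is a pure $n_0$-dimensional subcomplex of $[-1,1]^N$ (closed under taking faces, and every cube in it is a face of an $n_0$-dimensional cube in it). Under $C\mapsto Q_{s(C)}$, the $n_0$-dimensional cells of $\mathcal{C}(F)$ correspond to the vertices of $\mathcal{S}(F)$, and in general the codimension-$k$ cells of $\mathcal{C}(F)$ correspond to the $k$-cells of $\mathcal{S}(F)$.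
   Context: A ReLU network of architecture $(n_0,\dots,n_m,1)$: affine maps $A_i:\mathbb{R}^{n_{i-1}}\to\mathbb{R}^{n_i}$, $1\le i\le m+1$, $n_{m+1}=1$; $F_i=\mathrm{ReLU}\circ A_i$ ($i\le m$), $G=A_{m+1}$, $F=G\circ F_m\circ\cdots\circ F_1$, $F_{(k)}=F_k\circ\cdots\circ F_1$ ($F_{(0)}=\mathrm{id}$), $F^{(k)}=G\circ F_m\circ\cdots\circ F_k$ ($F^{(m+1)}=G$). Node maps $F_{ij}=\pi_j\circ A_i\circ F_{(i-1)}$, $1\le i\le m+1$, $1\le j\le n_i$; $N=n_1+\dots+n_m+1$. Polyhedra are finite intersections of closed half-spaces; $C^\circ$ is the relative interior. $R^{(i)}$ is the polyhedral complex on $\mathbb{R}^{n_{i-1}}$ induced by the hyperplanes $H_{ij}=\{\pi_jA_i=0\}$ (cells: nonempty intersections of one choice among $\{\pi_jA_i\ge0\},\{\pi_jA_i\le0\},\{\pi_jA_i=0\}$ for each $j$). Canonical polyhedral complex: $\mathcal{C}(F_{(1)})=R^{(1)}$, $\mathcal{C}(F_{(k)})=\{C\cap F_{(k-1)}^{-1}(R)\neq\emptyset: C\in\mathcal{C}(F_{(k-1)}),R\in R^{(k)}\}$, $2\le k\le m+1$; $\mathcal{C}(F)$ is the last; likewise $\mathcal{C}(F^{(k)})$ on $\mathbb{R}^{n_{k-1}}$, $\mathcal{C}(F^{(m+1)})=R^{(m+1)}$. Sign sequence: $s(C)\in\{-1,0,1\}^N$, $s_{ij}(C)=\mathrm{sgn}(F_{ij}(x))$,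 $x\in C^\circ$. Generic: for every $i$, any $k$ of the hyperplanes $H_{i1},\dots,H_{in_i}$ meet in an affine subspace of dimension $n_{i-1}-k$ (empty if $k>n_{i-1}$). Supertransversal: for every $1\le i\le m$, the restriction of $F_i$ to the relative interior of each cell of $R^{(i)}$ is transverse to the relative interior of every cell of $\mathcal{C}(F^{(i+1)})$. *)

theory Defs
  imports "HOL-Analysis.Analysis" "HOL-Library.Function_Algebras"
begin

text \<open>Vectors of R^k are represented as functions nat => real that vanish at all
  coordinates >= k (coordinates are 0-based: pi_j is evaluation at j-1).
  We equip functions with the pointwise real vector space structure; the topology
  is the product topology of HOL-Analysis (on each R^k it is the Euclidean one).\<close>

instantiation "fun" :: (type, scaleR) scaleR
begin
definition scaleR_fun :: "real \<Rightarrow> ('a \<Rightarrow> 'b) \<Rightarrow> 'a \<Rightarrow> 'b"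
  where "scaleR_fun r f = (\<lambda>x. r *\<^sub>R f x)"
instance ..
end

instance "fun" :: (type, real_vector) real_vector
  by standard (auto simp: scaleR_fun_def fun_eq_iff scaleR_add_right scaleR_add_left)

definition vspace :: "nat \<Rightarrow> (nat \<Rightarrow> real) set" where
  "vspace k = {x. \<forall>j. k \<le> j \<longrightarrow> x j = 0}"

definition relu_vec :: "(nat \<Rightarrow> real) \<Rightarrow> (nat \<Rightarrow> real)" where
  "relu_vec x = (\<lambda>j. max 0 (x j))"

definition tangent :: "('a::real_vector) set \<Rightarrow> 'a set" where
  "tangent S = span {y - z | y z. y \<in> S \<and> z \<in> S}"

definition affdim :: "('a::real_vector) set \<Rightarrow> nat" where
  "affdim S = dim (tangent S)"

text \<open>A network of architecture (n 0, ..., n m, 1) is given by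
  m, the widths n, weights W i j k (layer i, output j < n i, input k < n (i-1))
  and biases b i j.\<close>

definition aff_layer :: "(nat \<Rightarrow> nat) \<Rightarrow> (nat \<Rightarrow> nat \<Rightarrow> nat \<Rightarrow> real) \<Rightarrow> (nat \<Rightarrow> nat \<Rightarrow> real)
    \<Rightarrow> nat \<Rightarrow> (nat \<Rightarrow> real) \<Rightarrow> (nat \<Rightarrow> real)" where
  "aff_layer n W b i x = (\<lambda>j. if j < n i then (\<Sum>k<n (i - 1). W i j k * x k) + b i j else 0)"

definition relu_layer where
  "relu_layer n W b i = relu_vec \<circ> aff_layer n W b i"

primrec apply_layers :: "(nat \<Rightarrow> nat) \<Rightarrow> (nat \<Rightarrow> nat \<Rightarrow> nat \<Rightarrow> real) \<Rightarrow> (nat \<Rightarrow> nat \<Rightarrow> real)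
    \<Rightarrow> nat \<Rightarrow> nat \<Rightarrow> (nat \<Rightarrow> real) \<Rightarrow> (nat \<Rightarrow> real)" where
  "apply_layers n W b i0 0 = id"
| "apply_layers n W b i0 (Suc d) = relu_layer n W b (i0 + d) \<circ> apply_layers n W b i0 d"

abbreviation Fpre where "Fpre n W b k \<equiv> apply_layers n W b 1 k"

definition node_map where
  "node_map n W b i j x = aff_layer n W b i (Fpre n W b (i - 1) x) j"

definition nodes :: "nat \<Rightarrow> (nat \<Rightarrow> nat) \<Rightarrow> (nat \<times> nat) set" where
  "nodes m n = {(i, j). 1 \<le> i \<and> i \<le> m + 1 \<and> j < n i}"

definition arr_cell where
  "arr_cell n W b i (\<tau>::nat \<Rightarrow> int) = {x \<in> vspace (n (i - 1)). \<forall>j < n i.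
      (\<tau> j = 1 \<longrightarrow> aff_layer n W b i x j \<ge> 0) \<and>
      (\<tau> j = -1 \<longrightarrow> aff_layer n W b i x j \<le> 0) \<and>
      (\<tau> j = 0 \<longrightarrow> aff_layer n W b i x j = 0)}"

definition arrangement :: "(nat \<Rightarrow> nat) \<Rightarrow> (nat \<Rightarrow> nat \<Rightarrow> nat \<Rightarrow> real) \<Rightarrow> (nat \<Rightarrow> nat \<Rightarrow> real)
    \<Rightarrow> nat \<Rightarrow> (nat \<Rightarrow> real) set set" where
  "arrangement n W b i = {arr_cell n W b i \<tau> | \<tau>. (\<forall>j < n i. \<tau> j \<in> {-1, 0, 1}) \<and> arr_cell n W b i \<tau> \<noteq> {}}"

text \<open>canon_from n W b k d is the canonical polyhedral complex on R^(n(k-1)) of the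
  composite of layers k, ..., k+d-1 (the last one without ReLU being irrelevant).
  Hence C(F_(k)) = canon_from 1 k, C(F) = canon_from 1 (m+1), and
  C(F^(k)) = canon_from k (m+2-k).\<close>
primrec canon_from :: "(nat \<Rightarrow> nat) \<Rightarrow> (nat \<Rightarrow> nat \<Rightarrow> nat \<Rightarrow> real) \<Rightarrow> (nat \<Rightarrow> nat \<Rightarrow> real)
    \<Rightarrow> nat \<Rightarrow> nat \<Rightarrow> (nat \<Rightarrow> real) set set" where
  "canon_from n W b k 0 = {vspace (n (k - 1))}"
| "canon_from n W b k (Suc d) =
     {C \<inter> (apply_layers n W b k d -` R) | C R.
        C \<in> canon_from n W b k d \<and> R \<in> arrangement n W b (k + d) \<and>
        C \<inter> (apply_layers n W b k d -` R) \<noteq> {}}"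

abbreviation canon_complex where
  "canon_complex m n W b \<equiv> canon_from n W b 1 (m + 1)"

definition sign_seq where
  "sign_seq m n W b C =
     (\<lambda>l. if l \<in> nodes m n
          then sgn (node_map n W b (fst l) (snd l) (SOME x. x \<in> rel_interior C)) else 0)"

definition hyperplane_nodes where
  "hyperplane_nodes n W b i J = {x \<in> vspace (n (i - 1)). \<forall>j\<in>J. aff_layer n W b i x j = 0}"

definition generic_net where
  "generic_net m n W b \<longleftrightarrow>
     (\<forall>i \<in> {1..m+1}. \<forall>J \<subseteq> {..<n i}.
        (card J \<le> n (i - 1) \<longrightarrow> hyperplane_nodes n W b i J \<noteq> {} \<and>
                                  affdim (hyperplane_nodes n W b i J) = n (i - 1) - card J) \<and>
        (card J > n (i - 1) \<longrightarrow> hyperplane_nodes n W b i J = {}))"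

text \<open>Differential of F_i restricted to the relative interior of a cell of R^(i), at x
  (F_i is affine there; the coordinates that are not positive at x are constant
  (zero) on the cell).\<close>
definition dlayer where
  "dlayer n W b i x v =
     (\<lambda>j. if j < n i \<and> aff_layer n W b i x j > 0 then (\<Sum>k<n (i - 1). W i j k * v k) else 0)"

definition transverse_on where
  "transverse_on n W b i C D \<longleftrightarrow>
     (\<forall>x \<in> rel_interior C. relu_layer n W b i x \<in> rel_interior D \<longrightarrow>
        {u + w | u w. u \<in> dlayer n W b i x ` tangent C \<and> w \<in> tangent D} = vspace (n i))"

definition supertransversal where
  "supertransversal m n W b \<longleftrightarrow>
     (\<forall>i \<in> {1..m}. \<forall>C \<in> arrangement n W b i. \<forall>D \<in> canon_from n W b (i + 1) (m + 1 - i).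
        transverse_on n W b i C D)"

definition cube :: "nat \<Rightarrow> (nat \<Rightarrow> nat) \<Rightarrow> (nat \<times> nat \<Rightarrow> real) \<Rightarrow> (nat \<times> nat \<Rightarrow> real) set" where
  "cube m n \<sigma> = {x. (\<forall>l. l \<notin> nodes m n \<longrightarrow> x l = 0) \<and>
      (\<forall>l \<in> nodes m n. -1 \<le> x l \<and> x l \<le> 1 \<and> (\<sigma> l \<noteq> 0 \<longrightarrow> x l = \<sigma> l))}"

definition sign_vectors :: "nat \<Rightarrow> (nat \<Rightarrow> nat) \<Rightarrow> (nat \<times> nat \<Rightarrow> real) set" where
  "sign_vectors m n = {\<sigma>. (\<forall>l. \<sigma> l \<in> {-1, 0, 1}) \<and> (\<forall>l. l \<notin> nodes m n \<longrightarrow> \<sigma> l = 0)}"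

definition cube_dim where
  "cube_dim m n \<sigma> = card {l \<in> nodes m n. \<sigma> l = 0}"

definition sign_complex where
  "sign_complex m n W b = (\<lambda>C. cube m n (sign_seq m n W b C)) ` canon_complex m n W b"

end

theory Submission
  imports Defs
begin

definition lf :: "((nat \<Rightarrow> real) \<Rightarrow> real) \<Rightarrow> bool" where
  "lf g \<longleftrightarrow> (\<forall>a c. g (a + c) = g a + g c) \<and> (\<forall>r a. g (r *\<^sub>R a) = r * g a)"

lemma lf_add: "lf g \<Longrightarrow> g (a + c) = g a + g c" by (simp add: lf_def)
lemma lf_scale: "lf g \<Longrightarrow> g (r *\<^sub>R a) = r * g a" by (simp add: lf_def)
lemma lf_zero: "lf g \<Longrightarrow> g 0 = 0"
  using lf_scale[of g 0 0] by simp
lemma lf_diff: "lf g \<Longrightarrow> g (a - c) = g a - g c"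
  using lf_add[of g "a - c" c] by simp
lemma lf_sum: "lf g \<Longrightarrow> g (\<Sum>j\<in>J. f j) = (\<Sum>j\<in>J. g (f j))"
  by (induction J rule: infinite_finite_induct) (auto simp: lf_zero lf_add)

lemma fun_sum_apply: "(\<Sum>k\<in>A. (f k :: nat \<Rightarrow> real)) j = (\<Sum>k\<in>A. f k j)"
  by (induction A rule: infinite_finite_induct) auto

lemma scaleR_apply[simp]: "((c::real) *\<^sub>R (f::nat\<Rightarrow>real)) j = c * f j"
  by (simp add: scaleR_fun_def)

definition ev :: "nat \<Rightarrow> nat \<Rightarrow> real" where "ev q = (\<lambda>j. if j = q then 1 else 0)"

lemma vspace_subspace: "subspace (vspace N)"
  unfolding subspace_def vspace_def by auto

lemma vspace_span: "vspace N \<subseteq> span (ev ` {..<N})"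
proof
  fix x assume x: "x \<in> vspace N"
  have "x = (\<Sum>q<N. x q *\<^sub>R ev q)"
  proof
    fix j
    show "x j = (\<Sum>q<N. x q *\<^sub>R ev q) j"
      using x by (cases "j < N") (auto simp: fun_sum_apply ev_def vspace_def if_distrib cong: if_cong)
  qed
  also have "\<dots> \<in> span (ev ` {..<N})"
    by (intro real_vector.span_sum real_vector.span_scale real_vector.span_base) auto
  finally show "x \<in> span (ev ` {..<N})" .
qed

lemma indep_finite: "B \<subseteq> vspace N \<Longrightarrow> independent B \<Longrightarrow> finite B"
  using real_vector.independent_span_bound[of "ev ` {..<N}" B] vspace_span[of N] by auto

lemma subspace_ker: "subspace S \<Longrightarrow> lf g \<Longrightarrow> subspace {v\<in>S. g v = 0}"
  unfolding subspace_def by (auto simp: lf_add lf_scale lf_zero)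

lemma one_functional:
  assumes S: "subspace S" "S \<subseteq> vspace N" and g: "lf g" and s: "s \<in> S" "g s \<noteq> 0"
  shows "dim S = Suc (dim {v\<in>S. g v = 0})"
proof -
  let ?S0 = "{v\<in>S. g v = 0}"
  obtain B where B: "B \<subseteq> ?S0" "independent B" "?S0 \<subseteq> span B" "card B = dim ?S0"
    using real_vector.basis_exists by blast
  have fB: "finite B" using B S indep_finite[of B N] by auto
  have spB: "span B \<subseteq> ?S0"
    using B(1) subspace_ker[OF S(1) g] real_vector.span_minimal by blast
  then have sB: "s \<notin> span B" using s by auto
  have ind: "independent (insert s B)"
    using B(2) sB by (simp add: real_vector.independent_insert)
  have "insert s B \<subseteq> S" using B(1) s by auto
  moreover have "S \<subseteq> span (insert s B)"
  proof
    fix v assume v: "v \<in> S"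
    let ?c = "g v / g s"
    have "v - ?c *\<^sub>R s \<in> ?S0"
      using v s S(1) g by (auto simp: lf_diff lf_scale real_vector.subspace_diff real_vector.subspace_scale)
    then have "v - ?c *\<^sub>R s \<in> span (insert s B)"
      using B(3) real_vector.span_mono[of B "insert s B"] by auto
    moreover have "?c *\<^sub>R s \<in> span (insert s B)"
      by (intro real_vector.span_scale real_vector.span_base) auto
    ultimately have "(v - ?c *\<^sub>R s) + ?c *\<^sub>R s \<in> span (insert s B)"
      by (rule real_vector.span_add)
    then show "v \<in> span (insert s B)" by simp
  qed
  ultimately have "card (insert s B) = dim S"
    using ind real_vector.basis_card_eq_dim by blast
  moreover have "card (insert s B) = Suc (card B)"
    using fB sB real_vector.span_base[of s B] by (metis card_insert_disjoint)
  ultimately show ?thesis using B(4) by simp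
qed

lemma dim_zero_set: "dim {0::nat\<Rightarrow>real} = 0"
proof -
  have "card {} = dim {0::nat\<Rightarrow>real}"
    using real_vector.basis_card_eq_dim[of "{}" "{0::nat\<Rightarrow>real}"]
    by (simp add: real_vector.span_empty real_vector.independent_empty)
  then show ?thesis by simp
qed

lemma dim_vspace: "dim (vspace N) = N"
proof (induction N)
  case 0
  have "vspace 0 = {0}" by (auto simp: vspace_def)
  then show ?case using dim_zero_set by simp
next
  case (Suc N)
  have eq: "{v \<in> vspace (Suc N). v N = 0} = vspace N"
  proof (auto simp: vspace_def)
    fix x :: "nat \<Rightarrow> real" and j assume "\<forall>j\<ge>Suc N. x j = 0" "x N = 0" "N \<le> j"
    then show "x j = 0" by (cases "j = N") auto
  qed
  have "lf (\<lambda>v. v N)" by (simp add: lf_def)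
  moreover have "ev N \<in> vspace (Suc N)" "ev N N \<noteq> 0" by (auto simp: ev_def vspace_def)
  ultimately have "dim (vspace (Suc N)) = Suc (dim {v \<in> vspace (Suc N). v N = 0})"
    using one_functional[OF vspace_subspace order_refl] by blast
  then show ?case using eq Suc by simp
qed

lemma dim_mono_vs: "A \<subseteq> B \<Longrightarrow> B \<subseteq> vspace N \<Longrightarrow> dim A \<le> dim B"
proof -
  assume AB: "A \<subseteq> B" and BV: "B \<subseteq> vspace N"
  obtain C where C: "C \<subseteq> B" "independent C" "B \<subseteq> span C" "card C = dim B"
    using real_vector.basis_exists by blast
  have "finite C" using C BV indep_finite[of C N] by auto
  then have "dim A \<le> card C" using AB C(3) real_vector.dim_le_card[of A C] by auto
  then show ?thesis using C(4) by simp
qed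

definition kerset :: "nat \<Rightarrow> ('l \<Rightarrow> (nat \<Rightarrow> real) \<Rightarrow> real) \<Rightarrow> 'l set \<Rightarrow> (nat \<Rightarrow> real) set" where
  "kerset N g Z = {v \<in> vspace N. \<forall>l\<in>Z. g l v = 0}"

lemma kerset_subspace: "(\<forall>l\<in>Z. lf (g l)) \<Longrightarrow> subspace (kerset N g Z)"
  unfolding subspace_def kerset_def vspace_def by (auto simp: lf_add lf_scale lf_zero)

lemma surj_dim:
  assumes "finite Z" "\<forall>l\<in>Z. lf (g l)"
    and "\<forall>c. \<exists>v\<in>vspace N. \<forall>l\<in>Z. g l v = c l"
  shows "dim (kerset N g Z) + card Z = N"
  using assms
proof (induction Z rule: finite_induct)
  case empty
  then show ?case by (simp add: kerset_def dim_vspace)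
next
  case (insert l0 Z)
  have "\<forall>c. \<exists>v\<in>vspace N. \<forall>l\<in>Z. g l v = c l" using insert.prems(2) by blast
  then have IH: "dim (kerset N g Z) + card Z = N"
    using insert.IH insert.prems(1) by blast
  obtain s where s: "s \<in> vspace N" "\<forall>l\<in>insert l0 Z. g l s = (if l = l0 then 1 else 0)"
    using insert.prems(2)[rule_format, of "\<lambda>l. if l = l0 then 1 else 0"] by blast
  have sK: "s \<in> kerset N g Z" using s insert(2) by (auto simp: kerset_def)
  have eq: "{v \<in> kerset N g Z. g l0 v = 0} = kerset N g (insert l0 Z)"
    by (auto simp: kerset_def)
  have "dim (kerset N g Z) = Suc (dim {v \<in> kerset N g Z. g l0 v = 0})"
    by (rule one_functional[of _ N]) (use insert sK s kerset_subspace[of Z g N] in \<open>auto simp: kerset_def\<close>)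
  then show ?case using IH eq insert by simp
qed

lemma dim_surj:
  assumes fin: "finite J" and lfs: "\<forall>j\<in>J. lf (g j)"
    and dims: "\<forall>J'\<subseteq>J. dim (kerset N g J') + card J' = N"
  shows "\<forall>c. \<exists>v\<in>vspace N. \<forall>j\<in>J. g j v = c j"
proof -
  have unit: "\<exists>u\<in>vspace N. g j0 u = 1 \<and> (\<forall>j\<in>J - {j0}. g j u = 0)" if j0: "j0 \<in> J" for j0
  proof -
    have d1: "dim (kerset N g J) + card J = N" using dims by auto
    have d2: "dim (kerset N g (J - {j0})) + card (J - {j0}) = N" using dims by auto
    have cJ: "card J = Suc (card (J - {j0}))" using fin j0
      by (metis card_Suc_Diff1)
    have "\<not> kerset N g (J - {j0}) \<subseteq> kerset N g J"
    proof
      assume "kerset N g (J - {j0}) \<subseteq> kerset N g J"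
      then have "dim (kerset N g (J - {j0})) \<le> dim (kerset N g J)"
        by (rule dim_mono_vs[of _ _ N]) (auto simp: kerset_def)
      then show False using d1 d2 cJ by simp
    qed
    then obtain u where u: "u \<in> vspace N" "\<forall>j\<in>J - {j0}. g j u = 0" "g j0 u \<noteq> 0"
      by (auto simp: kerset_def)
    show ?thesis
      using u lfs j0
      by (intro bexI[of _ "(1 / g j0 u) *\<^sub>R u"]) (auto simp: lf_scale vspace_def)
  qed
  show ?thesis
  proof
    fix c
    obtain u where u: "\<forall>j0\<in>J. u j0 \<in> vspace N \<and> g j0 (u j0) = 1 \<and> (\<forall>j\<in>J - {j0}. g j (u j0) = 0)"
      using unit by metis
    let ?v = "\<Sum>j0\<in>J. c j0 *\<^sub>R u j0"
    have "?v \<in> vspace N"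
      using u by (auto simp: vspace_def fun_sum_apply)
    moreover have "g j ?v = c j" if j: "j \<in> J" for j
    proof -
      have "g j ?v = (\<Sum>j0\<in>J. c j0 * g j (u j0))"
        using lfs j by (simp add: lf_sum lf_scale)
      also have "\<dots> = (\<Sum>j0\<in>J. if j0 = j then c j else 0)"
        using u j by (intro sum.cong) auto
      also have "\<dots> = c j" using fin j by simp
      finally show ?thesis .
    qed
    ultimately show "\<exists>v\<in>vspace N. \<forall>j\<in>J. g j v = c j" by blast
  qed
qed

definition cnd :: "real \<Rightarrow> real \<Rightarrow> bool" where
  "cnd t v = (if t > 0 then v \<ge> 0 else if t < 0 then v \<le> 0 else v = 0)"

lemma cnd_sgn: "cnd (sgn v) v" by (simp add: cnd_def sgn_real_def)

locale net = fixes n :: "nat \<Rightarrow> nat" and W :: "nat \<Rightarrow> nat \<Rightarrow> nat \<Rightarrow> real" and b :: "nat \<Rightarrow> nat \<Rightarrow> real"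
begin

definition rowl where "rowl i y j = (\<Sum>q<n (i - 1). W i j q * y q)"

lemma aff_eq: "aff_layer n W b i y j = (if j < n i then rowl i y j + b i j else 0)"
  by (simp add: aff_layer_def rowl_def)

lemma rowl_expand: "rowl i (x + t *\<^sub>R v) j = rowl i x j + t * rowl i v j"
  by (simp add: rowl_def algebra_simps sum.distrib sum_distrib_left)

lemma rowl_lam1[simp]: "rowl i (\<lambda>a. x a + t * v a) j = rowl i x j + t * rowl i v j"
  by (simp add: rowl_def algebra_simps sum.distrib sum_distrib_left)
lemma rowl_lam2[simp]: "rowl i (\<lambda>a. x a + v a) j = rowl i x j + rowl i v j"
  by (simp add: rowl_def algebra_simps sum.distrib sum_distrib_left)
lemma rowl_lam3[simp]: "rowl i (\<lambda>a. t * v a) j = t * rowl i v j"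
  by (simp add: rowl_def algebra_simps sum.distrib sum_distrib_left)

lemma rowl_add: "rowl i (x + v) j = rowl i x j + rowl i v j"
  by (simp add: rowl_def algebra_simps sum.distrib)

lemma rowl_scale: "rowl i (t *\<^sub>R v) j = t * rowl i v j"
  by (simp add: rowl_def algebra_simps sum_distrib_left)

definition NM where "NM k l x = aff_layer n W b (fst l) (apply_layers n W b k (fst l - k) x) (snd l)"

definition ndset where "ndset k d = {l. k \<le> fst l \<and> fst l < k + d \<and> snd l < n (fst l)}"

definition SS where "SS k d \<tau> = {x \<in> vspace (n (k - 1)). \<forall>l\<in>ndset k d. cnd (\<tau> l) (NM k l x)}"

definition sv where "sv k d x = (\<lambda>l. if l \<in> ndset k d then sgn (NM k l x) else 0)"

primrec PA where
  "PA k 0 \<tau> = id"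
| "PA k (Suc e) \<tau> = (\<lambda>y j. if 0 < \<tau> (k + e, j) then aff_layer n W b (k + e) (PA k e \<tau> y) j else 0)"

primrec LPA where
  "LPA k 0 \<tau> v = v"
| "LPA k (Suc e) \<tau> v = (\<lambda>j. if j < n (k + e) \<and> 0 < \<tau> (k + e, j) then rowl (k + e) (LPA k e \<tau> v) j else 0)"

definition PN where "PN k l \<tau> y = aff_layer n W b (fst l) (PA k (fst l - k) \<tau> y) (snd l)"

definition lin where "lin k l \<tau> v = rowl (fst l) (LPA k (fst l - k) \<tau> v) (snd l)"

lemma finite_ndset: "finite (ndset k d)"
proof -
  have "ndset k d \<subseteq> (SIGMA i:{k..<k+d}. {..<n i})" by (auto simp: ndset_def)
  then show ?thesis by (rule finite_subset) auto
qed

lemma PA_expand: "PA k e \<tau> (x + t *\<^sub>R v) = PA k e \<tau> x + t *\<^sub>R LPA k e \<tau> v"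
proof (induction e)
  case 0 then show ?case by simp
next
  case (Suc e)
  show ?case unfolding PA.simps LPA.simps Suc.IH by (auto simp: fun_eq_iff aff_eq rowl_expand)
qed

lemma LPA_add: "LPA k e \<tau> (x + v) = LPA k e \<tau> x + LPA k e \<tau> v"
proof (induction e)
  case 0 then show ?case by simp
next
  case (Suc e)
  show ?case unfolding LPA.simps Suc.IH by (auto simp: fun_eq_iff rowl_add)
qed

lemma LPA_scale: "LPA k e \<tau> (t *\<^sub>R v) = t *\<^sub>R LPA k e \<tau> v"
proof (induction e)
  case 0 then show ?case by simp
next
  case (Suc e)
  show ?case unfolding LPA.simps Suc.IH by (auto simp: fun_eq_iff rowl_scale)
qed

lemma lf_lin: "lf (lin k l \<tau>)"
  by (simp add: lf_def lin_def LPA_add LPA_scale rowl_add rowl_scale)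

lemma PN_expand: "snd l < n (fst l) \<Longrightarrow> PN k l \<tau> (x + t *\<^sub>R v) = PN k l \<tau> x + t * lin k l \<tau> v"
  by (simp add: PN_def lin_def PA_expand aff_eq rowl_expand)

lemma PN_diff: "snd l < n (fst l) \<Longrightarrow> PN k l \<tau> x - PN k l \<tau> y = lin k l \<tau> (x - y)"
  using PN_expand[of l k \<tau> y 1 "x - y"] by simp

lemma relu_pattern:
  assumes "\<forall>j<n i. cnd (\<tau> (i, j)) (aff_layer n W b i y j)"
  shows "relu_layer n W b i y = (\<lambda>j. if 0 < \<tau> (i, j) then aff_layer n W b i y j else 0)"
proof
  fix j
  show "relu_layer n W b i y j = (if 0 < \<tau> (i, j) then aff_layer n W b i y j else 0)"
  proof (cases "j < n i")
    case True
    then show ?thesis using assms by (auto simp: relu_layer_def relu_vec_def cnd_def split: if_splits)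
  next
    case False
    then show ?thesis by (auto simp: relu_layer_def relu_vec_def aff_layer_def)
  qed
qed

lemma ndset_mono: "d \<le> d' \<Longrightarrow> ndset k d \<subseteq> ndset k d'"
  by (auto simp: ndset_def)

lemma P1:
  assumes "\<forall>l\<in>ndset k d. cnd (\<tau> l) (NM k l x)"
  shows "apply_layers n W b k d x = PA k d \<tau> x"
  using assms
proof (induction d)
  case 0
  then show ?case by simp
next
  case (Suc d)
  have IH: "apply_layers n W b k d x = PA k d \<tau> x"
    using Suc ndset_mono[of d "Suc d" k] by auto
  have "\<forall>j<n (k + d). cnd (\<tau> (k + d, j)) (aff_layer n W b (k + d) (apply_layers n W b k d x) j)"
  proof (intro allI impI)
    fix j assume "j < n (k + d)"
    then have "(k + d, j) \<in> ndset k (Suc d)" by (auto simp: ndset_def)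
    then show "cnd (\<tau> (k + d, j)) (aff_layer n W b (k + d) (apply_layers n W b k d x) j)"
      using Suc.prems by (auto simp: NM_def)
  qed
  then show ?case using relu_pattern[of "k + d" \<tau>] IH by (simp add: relu_layer_def)
qed

lemma P1N:
  assumes "\<forall>l\<in>ndset k d. cnd (\<tau> l) (NM k l x)" "l \<in> ndset k d"
  shows "NM k l x = PN k l \<tau> x"
proof -
  have "fst l - k \<le> d" using assms(2) by (auto simp: ndset_def)
  then have "\<forall>l\<in>ndset k (fst l - k). cnd (\<tau> l) (NM k l x)"
    using assms(1) ndset_mono by blast
  then show ?thesis using P1 by (simp add: NM_def PN_def)
qed

lemma P2:
  assumes "\<forall>l\<in>ndset k d. cnd (\<tau> l) (PN k l \<tau> x)"
  shows "apply_layers n W b k d x = PA k d \<tau> x \<and> (\<forall>l\<in>ndset k d. NM k l x = PN k l \<tau> x)"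
  using assms
proof (induction d)
  case 0
  then show ?case by (simp add: ndset_def)
next
  case (Suc d)
  have IH: "apply_layers n W b k d x = PA k d \<tau> x \<and> (\<forall>l\<in>ndset k d. NM k l x = PN k l \<tau> x)"
    using Suc ndset_mono[of d "Suc d" k] by auto
  have top: "NM k (k + d, j) x = PN k (k + d, j) \<tau> x" for j
    using IH by (simp add: NM_def PN_def)
  have "\<forall>j<n (k + d). cnd (\<tau> (k + d, j)) (aff_layer n W b (k + d) (apply_layers n W b k d x) j)"
  proof (intro allI impI)
    fix j assume "j < n (k + d)"
    then have "(k + d, j) \<in> ndset k (Suc d)" by (auto simp: ndset_def)
    then show "cnd (\<tau> (k + d, j)) (aff_layer n W b (k + d) (apply_layers n W b k d x) j)"
      using Suc.prems top[of j] by (auto simp: NM_def)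
  qed
  then have A: "apply_layers n W b k (Suc d) x = PA k (Suc d) \<tau> x"
    using relu_pattern[of "k + d" \<tau>] IH by (simp add: relu_layer_def)
  have "NM k l x = PN k l \<tau> x" if l: "l \<in> ndset k (Suc d)" for l
  proof (cases "fst l < k + d")
    case True
    then show ?thesis using IH l by (cases l) (auto simp: ndset_def)
  next
    case False
    then have "fst l = k + d" using l by (auto simp: ndset_def)
    then show ?thesis using top[of "snd l"] by (cases l) auto
  qed
  then show ?case using A by blast
qed

lemma relu_vspace: "relu_layer n W b i y \<in> vspace (n i)"
  by (simp add: relu_layer_def relu_vec_def aff_layer_def vspace_def)

lemma AL_vspace: "x \<in> vspace (n (k - 1)) \<Longrightarrow> apply_layers n W b k d x \<in> vspace (n (k + d - 1))"
  by (cases d) (auto simp: relu_vspace)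

lemma AL_peel_pt: "apply_layers n W b k (Suc d) x = apply_layers n W b (Suc k) d (relu_layer n W b k x)"
  by (induction d arbitrary: x) (auto simp: add.commute add.left_commute)

lemma AL_peel: "apply_layers n W b k (Suc d) = apply_layers n W b (Suc k) d \<circ> relu_layer n W b k"
  using AL_peel_pt by (auto simp: fun_eq_iff)

lemma PA_peel: "PA k (Suc e) \<tau> y = PA (Suc k) e \<tau> (PA k 1 \<tau> y)"
  by (induction e arbitrary: y) (auto simp: fun_eq_iff add.commute add.left_commute)

lemma LPA_peel: "LPA k (Suc e) \<tau> v = LPA (Suc k) e \<tau> (LPA k 1 \<tau> v)"
  by (induction e arbitrary: v) (auto simp: fun_eq_iff add.commute add.left_commute)

lemma NM_peel: "k < fst l \<Longrightarrow> NM k l x = NM (Suc k) l (relu_layer n W b k x)"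
proof -
  assume "k < fst l"
  then have "fst l - k = Suc (fst l - Suc k)" by simp
  then show ?thesis by (simp only: NM_def AL_peel_pt)
qed

lemma lin_peel: "k < fst l \<Longrightarrow> lin k l \<tau> v = lin (Suc k) l \<tau> (LPA k 1 \<tau> v)"
proof -
  assume "k < fst l"
  then have "fst l - k = Suc (fst l - Suc k)" by simp
  then show ?thesis by (simp only: lin_def LPA_peel)
qed

lemma ndset_Suc: "ndset k (Suc d) = {l. fst l = k \<and> snd l < n k} \<union> ndset (Suc k) d"
  by (auto simp: ndset_def) (metis le_antisym not_less_eq_eq)

lemma lin_first: "lin k (k, j) \<tau> v = rowl k v j"
  by (simp add: lin_def)

lemma NM_first: "NM k (k, j) x = aff_layer n W b k x j"
  by (simp add: NM_def)

end

lemma cnd_zero: "cnd t 0" by (simp add: cnd_def)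

lemma cnd_avg: "cnd t a \<Longrightarrow> cnd t c \<Longrightarrow> cnd t ((a + c) / 2) \<and> ((a + c) / 2 = 0 \<longleftrightarrow> a = 0 \<and> c = 0)"
  by (auto simp: cnd_def split: if_splits)

lemma sgn_pert: "\<bar>d\<bar> < \<bar>a\<bar> \<Longrightarrow> sgn (a + d) = sgn (a::real)"
  by (auto simp: sgn_real_def abs_if split: if_splits)

lemma cnd_of_sgn: "sgn v = t \<Longrightarrow> cnd t v" using cnd_sgn by blast

lemma finite_min:
  assumes "finite L" "\<forall>l\<in>L. \<exists>e>0. \<forall>t. 0 < t \<and> t \<le> e \<longrightarrow> P l t"
  shows "\<exists>e>0. \<forall>l\<in>L. \<forall>t. 0 < t \<and> t \<le> e \<longrightarrow> P l (t::real)"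
  using assms
proof (induction L rule: finite_induct)
  case empty
  then show ?case by (auto intro: exI[of _ 1])
next
  case (insert l0 L)
  obtain e1 where e1: "e1 > 0" "\<forall>t. 0 < t \<and> t \<le> e1 \<longrightarrow> P l0 t" using insert.prems by auto
  obtain e2 where e2: "e2 > 0" "\<forall>l\<in>L. \<forall>t. 0 < t \<and> t \<le> e2 \<longrightarrow> P l t" using insert by auto
  show ?case using e1 e2 by (intro exI[of _ "min e1 e2"]) auto
qed

context net begin

definition Zs where "Zs k d x = {l \<in> ndset k d. NM k l x = 0}"

definition TT where "TT k d x = kerset (n (k - 1)) (\<lambda>l. lin k l (sv k d x)) (Zs k d x)"

lemma SS_self: "x \<in> vspace (n (k - 1)) \<Longrightarrow> x \<in> SS k d (sv k d x)"
  by (auto simp: SS_def sv_def cnd_sgn)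

lemma SS_NM_PN: "y \<in> SS k d \<tau> \<Longrightarrow> l \<in> ndset k d \<Longrightarrow> NM k l y = PN k l \<tau> y"
  by (rule P1N) (auto simp: SS_def)

lemma SS_mid:
  assumes x: "x \<in> SS k d \<tau>" and y: "y \<in> SS k d \<tau>"
  shows "x + (1/2) *\<^sub>R (y - x) \<in> SS k d \<tau> \<and>
    (\<forall>l\<in>ndset k d. NM k l (x + (1/2) *\<^sub>R (y - x)) = (NM k l x + NM k l y) / 2)"
proof -
  let ?z = "x + (1/2) *\<^sub>R (y - x)"
  have PNz: "PN k l \<tau> ?z = (NM k l x + NM k l y) / 2" if l: "l \<in> ndset k d" for l
  proof -
    have sl: "snd l < n (fst l)" using l by (auto simp: ndset_def)
    have "PN k l \<tau> ?z = PN k l \<tau> x + (1/2) * lin k l \<tau> (y - x)"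
      using PN_expand[OF sl, of k \<tau> x "1/2" "y - x"] by simp
    also have "\<dots> = PN k l \<tau> x + (1/2) * (PN k l \<tau> y - PN k l \<tau> x)"
      using PN_diff[OF sl, of k \<tau> y x] by simp
    also have "\<dots> = (NM k l x + NM k l y) / 2"
      using SS_NM_PN[OF x l] SS_NM_PN[OF y l] by (simp add: field_simps)
    finally show ?thesis .
  qed
  have c: "cnd (\<tau> l) (PN k l \<tau> ?z)" if l: "l \<in> ndset k d" for l
  proof -
    have "cnd (\<tau> l) ((NM k l x + NM k l y) / 2)"
      using cnd_avg[of "\<tau> l" "NM k l x" "NM k l y"] x y l by (auto simp: SS_def)
    then show ?thesis unfolding PNz[OF l] .
  qed
  have eq: "\<forall>l\<in>ndset k d. NM k l ?z = PN k l \<tau> ?z"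
    using P2[of k d \<tau> ?z] c by blast
  have zv: "?z \<in> vspace (n (k - 1))" using x y by (auto simp: SS_def vspace_def)
  have "\<forall>l\<in>ndset k d. cnd (\<tau> l) (NM k l ?z)" using eq c by simp
  then have zS: "?z \<in> SS k d \<tau>" using zv by (simp add: SS_def)
  have "\<forall>l\<in>ndset k d. NM k l ?z = (NM k l x + NM k l y) / 2" using eq PNz by simp
  then show ?thesis using zS by blast
qed

lemma SS_real:
  assumes ne: "SS k d \<tau> \<noteq> {}"
  shows "\<exists>x\<in>SS k d \<tau>. SS k d \<tau> = SS k d (sv k d x)"
proof -
  define nz where "nz x = {l \<in> ndset k d. NM k l x \<noteq> 0}" for x
  have fnz: "finite (nz x)" for x using finite_ndset[of k d] by (auto simp: nz_def)
  have bnd: "card (nz x) \<le> card (ndset k d)" for x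
    using finite_ndset by (auto simp: nz_def intro: card_mono)
  obtain x0 where x0: "x0 \<in> SS k d \<tau>" using ne by auto
  obtain x where x: "x \<in> SS k d \<tau>" and xmax: "\<forall>y. y \<in> SS k d \<tau> \<longrightarrow> card (nz y) \<le> card (nz x)"
    using ex_has_greatest_nat[of "\<lambda>x. x \<in> SS k d \<tau>" x0 "\<lambda>x. card (nz x)" "Suc (card (ndset k d))"]
      x0 bnd by (meson le_imp_less_Suc)
  have sub: "nz y \<subseteq> nz x" if y: "y \<in> SS k d \<tau>" for y
  proof -
    let ?z = "x + (1/2) *\<^sub>R (y - x)"
    have z: "?z \<in> SS k d \<tau>" "\<forall>l\<in>ndset k d. NM k l ?z = (NM k l x + NM k l y) / 2"
      using SS_mid[OF x y] by auto
    have "nz ?z = nz x \<union> nz y"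
    proof -
      have "NM k l ?z = 0 \<longleftrightarrow> NM k l x = 0 \<and> NM k l y = 0" if l: "l \<in> ndset k d" for l
        using z(2) l cnd_avg[of "\<tau> l" "NM k l x" "NM k l y"] x y by (auto simp: SS_def)
      then show ?thesis by (auto simp: nz_def)
    qed
    moreover have "card (nz ?z) \<le> card (nz x)" using xmax z(1) by blast
    ultimately show ?thesis using fnz
      by (metis Un_upper1 card_seteq finite_Un sup.absorb_iff1)
  qed
  have "SS k d \<tau> = SS k d (sv k d x)"
  proof
    show "SS k d \<tau> \<subseteq> SS k d (sv k d x)"
    proof
      fix y assume y: "y \<in> SS k d \<tau>"
      have "cnd (sv k d x l) (NM k l y)" if l: "l \<in> ndset k d" for l
      proof (cases "NM k l x = 0")
        case True
        then have "NM k l y = 0" using sub[OF y] l by (auto simp: nz_def)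
        then show ?thesis by (simp add: cnd_zero)
      next
        case False
        have "cnd (\<tau> l) (NM k l x)" "cnd (\<tau> l) (NM k l y)" using x y l by (auto simp: SS_def)
        then show ?thesis using False l by (auto simp: sv_def cnd_def sgn_real_def split: if_splits)
      qed
      then show "y \<in> SS k d (sv k d x)" using y by (auto simp: SS_def)
    qed
  next
    show "SS k d (sv k d x) \<subseteq> SS k d \<tau>"
    proof
      fix y assume y: "y \<in> SS k d (sv k d x)"
      have "cnd (\<tau> l) (NM k l y)" if l: "l \<in> ndset k d" for l
      proof (cases "NM k l x = 0")
        case True
        then have "NM k l y = 0" using y l by (auto simp: SS_def sv_def cnd_def)
        then show ?thesis by (simp add: cnd_zero)
      next
        case False
        have "cnd (\<tau> l) (NM k l x)" "cnd (sv k d x l) (NM k l y)" using x y l by (auto simp: SS_def)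
        then show ?thesis using False l by (auto simp: sv_def cnd_def sgn_real_def split: if_splits)
      qed
      then show "y \<in> SS k d \<tau>" using y by (auto simp: SS_def)
    qed
  qed
  then show ?thesis using x by blast
qed

end

context net begin

lemma cnd_neg: "a \<noteq> 0 \<Longrightarrow> t > 0 \<Longrightarrow> \<not> cnd (sgn a) (- t * a)"
  by (cases "a > 0") (auto simp: cnd_def zero_le_mult_iff mult_le_0_iff)

lemma SMALL:
  assumes x: "x \<in> vspace (n (k - 1))" and v: "v \<in> vspace (n (k - 1))"
    and ref: "\<forall>l\<in>ndset k d. NM k l x \<noteq> 0 \<longrightarrow> \<tau> l = sgn (NM k l x)"
    and dir: "\<forall>l\<in>ndset k d. NM k l x = 0 \<longrightarrow> sgn (lin k l \<tau> v) = \<tau> l"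
  shows "\<exists>e>0. x + e *\<^sub>R v \<in> vspace (n (k - 1)) \<and> (\<forall>l\<in>ndset k d. sgn (NM k l (x + e *\<^sub>R v)) = \<tau> l)"
proof -
  have "cnd (\<tau> l) (NM k l x)" if l: "l \<in> ndset k d" for l
    using ref l by (cases "NM k l x = 0") (auto simp: cnd_zero intro: cnd_of_sgn)
  then have xS: "x \<in> SS k d \<tau>"
    using x by (auto simp: SS_def)
  have ex: "\<forall>l\<in>ndset k d. \<exists>e>0. \<forall>t. 0 < t \<and> t \<le> e \<longrightarrow> sgn (NM k l x + t * lin k l \<tau> v) = \<tau> l"
  proof
    fix l assume l: "l \<in> ndset k d"
    show "\<exists>e>0. \<forall>t. 0 < t \<and> t \<le> e \<longrightarrow> sgn (NM k l x + t * lin k l \<tau> v) = \<tau> l"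
    proof (cases "NM k l x = 0")
      case True
      then show ?thesis using dir l by (intro exI[of _ 1]) (auto simp: sgn_mult)
    next
      case False
      let ?a = "NM k l x" and ?c = "lin k l \<tau> v"
      have "sgn (?a + t * ?c) = \<tau> l" if t: "0 < t" "t \<le> \<bar>?a\<bar> / (\<bar>?c\<bar> + 1)" for t
      proof -
        have "\<bar>t * ?c\<bar> = t * \<bar>?c\<bar>" using t by (simp add: abs_mult)
        also have "\<dots> \<le> \<bar>?a\<bar> / (\<bar>?c\<bar> + 1) * \<bar>?c\<bar>" using mult_right_mono[OF t(2) abs_ge_zero[of ?c]] .
        also have "\<dots> < \<bar>?a\<bar>"
        proof -
          have "\<bar>?a\<bar> * \<bar>?c\<bar> < \<bar>?a\<bar> * (\<bar>?c\<bar> + 1)" using False by simp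
          then show ?thesis by (simp add: field_simps)
        qed
        finally show ?thesis using sgn_pert[of "t * ?c" ?a] ref l False by simp
      qed
      moreover have "\<bar>?a\<bar> / (\<bar>?c\<bar> + 1) > 0" using False by (simp add: add_pos_nonneg)
      ultimately show ?thesis by blast
    qed
  qed
  obtain e where e: "e > 0" "\<forall>l\<in>ndset k d. sgn (NM k l x + e * lin k l \<tau> v) = \<tau> l"
    using finite_min[OF finite_ndset ex] by (meson order_refl)
  let ?y = "x + e *\<^sub>R v"
  have PNy: "PN k l \<tau> ?y = NM k l x + e * lin k l \<tau> v" if l: "l \<in> ndset k d" for l
    using PN_expand[of l k \<tau> x e v] SS_NM_PN[OF xS l] l by (auto simp: ndset_def)
  have "\<forall>l\<in>ndset k d. cnd (\<tau> l) (PN k l \<tau> ?y)"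
    using PNy e(2) by (auto intro: cnd_of_sgn)
  then have "\<forall>l\<in>ndset k d. NM k l ?y = PN k l \<tau> ?y" using P2 by blast
  moreover have "?y \<in> vspace (n (k - 1))" using x v by (auto simp: vspace_def)
  ultimately show ?thesis using e PNy by (intro exI[of _ e]) auto
qed

lemma sv_eq_SS: "y \<in> vspace (n (k - 1)) \<Longrightarrow> (\<forall>l\<in>ndset k d. sgn (NM k l y) = \<tau> l) \<Longrightarrow> y \<in> SS k d \<tau>"
  by (auto simp: SS_def intro: cnd_of_sgn)

lemma affhull_SS:
  assumes x: "x \<in> vspace (n (k - 1))"
  shows "affine hull (SS k d (sv k d x)) \<subseteq> {z \<in> vspace (n (k - 1)). \<forall>l\<in>Zs k d x. PN k l (sv k d x) z = 0}"
proof (rule hull_minimal)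
  let ?\<sigma> = "sv k d x"
  show "SS k d ?\<sigma> \<subseteq> {z \<in> vspace (n (k - 1)). \<forall>l\<in>Zs k d x. PN k l ?\<sigma> z = 0}"
  proof
    fix s assume sS: "s \<in> SS k d ?\<sigma>"
    have "PN k l ?\<sigma> s = 0" if l: "l \<in> Zs k d x" for l
    proof -
      have l': "l \<in> ndset k d" using l by (simp add: Zs_def)
      have "NM k l s = PN k l ?\<sigma> s" using SS_NM_PN[OF sS l'] .
      moreover have "NM k l s = 0" using sS l l' by (auto simp: SS_def Zs_def sv_def cnd_def)
      ultimately show ?thesis by simp
    qed
    then show "s \<in> {z \<in> vspace (n (k - 1)). \<forall>l\<in>Zs k d x. PN k l ?\<sigma> z = 0}"
      using sS by (auto simp: SS_def)
  qed
  show "affine {z \<in> vspace (n (k - 1)). \<forall>l\<in>Zs k d x. PN k l ?\<sigma> z = 0}"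
    unfolding affine_def
  proof (intro ballI allI impI)
    fix a c :: "nat \<Rightarrow> real" and u v :: real
    assume a: "a \<in> {z \<in> vspace (n (k - 1)). \<forall>l\<in>Zs k d x. PN k l ?\<sigma> z = 0}"
      and c: "c \<in> {z \<in> vspace (n (k - 1)). \<forall>l\<in>Zs k d x. PN k l ?\<sigma> z = 0}" and uv: "u + v = 1"
    have ua: "u *\<^sub>R a + v *\<^sub>R a = a" using uv by (metis scaleR_left_distrib scaleR_one)
    have "u *\<^sub>R a + v *\<^sub>R c = (u *\<^sub>R a + v *\<^sub>R a) + v *\<^sub>R (c - a)"
      by (simp add: algebra_simps)
    then have eq: "u *\<^sub>R a + v *\<^sub>R c = a + v *\<^sub>R (c - a)" using ua by simp
    have "PN k l ?\<sigma> (a + v *\<^sub>R (c - a)) = 0" if l: "l \<in> Zs k d x" for l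
    proof -
      have sl: "snd l < n (fst l)" using l by (auto simp: Zs_def ndset_def)
      show ?thesis using PN_expand[OF sl, of k ?\<sigma> a v "c - a"] PN_diff[OF sl, of k ?\<sigma> c a] a c l by auto
    qed
    moreover have "a + v *\<^sub>R (c - a) \<in> vspace (n (k - 1))" using a c by (auto simp: vspace_def)
    ultimately show "u *\<^sub>R a + v *\<^sub>R c \<in> {z \<in> vspace (n (k - 1)). \<forall>l\<in>Zs k d x. PN k l ?\<sigma> z = 0}"
      using eq by simp
  qed
qed

lemma aff_cont: "continuous_on UNIV (\<lambda>y. aff_layer n W b i y j)"
  unfolding aff_eq rowl_def by (cases "j < n i") (auto intro!: continuous_intros)

lemma PA_cont: "continuous_on UNIV (PA k e \<tau>)"
proof (induction e)
  case 0
  then show ?case by (simp add: continuous_on_id)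
next
  case (Suc e)
  show ?case
  proof (simp, intro continuous_on_coordinatewise_then_product)
    fix j
    have "continuous_on UNIV (\<lambda>y. aff_layer n W b (k + e) (PA k e \<tau> y) j)"
      by (rule continuous_on_compose2[OF aff_cont Suc]) auto
    then show "continuous_on UNIV (\<lambda>y. if 0 < \<tau> (k + e, j) then aff_layer n W b (k + e) (PA k e \<tau> y) j else 0)"
      by (cases "0 < \<tau> (k + e, j)") auto
  qed
qed

lemma PN_cont: "continuous_on UNIV (PN k l \<tau>)"
  unfolding PN_def by (rule continuous_on_compose2[OF aff_cont PA_cont]) auto

lemma relint_SS:
  assumes x: "x \<in> vspace (n (k - 1))"
  shows "rel_interior (SS k d (sv k d x)) = {y \<in> vspace (n (k - 1)). sv k d y = sv k d x}"
proof
  let ?\<sigma> = "sv k d x" and ?S = "SS k d (sv k d x)"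
  show "{y \<in> vspace (n (k - 1)). sv k d y = sv k d x} \<subseteq> rel_interior ?S"
  proof
    fix y assume y: "y \<in> {y \<in> vspace (n (k - 1)). sv k d y = sv k d x}"
    define U where "U = (\<Inter>l\<in>ndset k d. {z. ?\<sigma> l = 0 \<or> 0 < ?\<sigma> l * PN k l ?\<sigma> z})"
    have oU: "open U" unfolding U_def
    proof (intro open_INT finite_ndset ballI)
      fix l
      show "open {z. ?\<sigma> l = 0 \<or> 0 < ?\<sigma> l * PN k l ?\<sigma> z}"
      proof (cases "?\<sigma> l = 0")
        case True then show ?thesis by simp
      next
        case False
        have "open {z. (\<lambda>_. 0) z < (\<lambda>z. ?\<sigma> l * PN k l ?\<sigma> z) z}"
          by (intro open_Collect_less continuous_intros PN_cont)
        then show ?thesis using False by simp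
      qed
    qed
    have yS: "y \<in> ?S" using y SS_self[of y k d] by simp
    have yU: "y \<in> U"
    proof -
      have "?\<sigma> l = 0 \<or> 0 < ?\<sigma> l * PN k l ?\<sigma> y" if l: "l \<in> ndset k d" for l
      proof -
        have "PN k l ?\<sigma> y = NM k l y" using SS_NM_PN[OF yS l] by simp
        moreover have "?\<sigma> l = sgn (NM k l y)"
        proof -
          have "sv k d y l = ?\<sigma> l" using y by simp
          then show ?thesis using l by (simp add: sv_def)
        qed
        ultimately show ?thesis by (auto simp: sgn_real_def)
      qed
      then show ?thesis by (auto simp: U_def)
    qed
    have "U \<inter> affine hull ?S \<subseteq> ?S"
    proof
      fix z assume z: "z \<in> U \<inter> affine hull ?S"
      then have z1: "z \<in> vspace (n (k - 1))" "\<forall>l\<in>Zs k d x. PN k l ?\<sigma> z = 0"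
        using affhull_SS[OF x] by auto
      have "cnd (?\<sigma> l) (PN k l ?\<sigma> z)" if l: "l \<in> ndset k d" for l
      proof (cases "?\<sigma> l = 0")
        case True
        then have "l \<in> Zs k d x" using l by (auto simp: Zs_def sv_def sgn_0_0)
        then show ?thesis using z1 by (simp add: cnd_zero)
      next
        case False
        then have "0 < ?\<sigma> l * PN k l ?\<sigma> z" using z l by (auto simp: U_def)
        then show ?thesis by (auto simp: cnd_def zero_less_mult_iff)
      qed
      then have "\<forall>l\<in>ndset k d. NM k l z = PN k l ?\<sigma> z" using P2 by blast
      then show "z \<in> ?S" using z1 \<open>\<And>l. l \<in> ndset k d \<Longrightarrow> cnd (?\<sigma> l) (PN k l ?\<sigma> z)\<close>
        by (auto simp: SS_def)
    qed
    then show "y \<in> rel_interior ?S" using oU yU yS by (auto simp: rel_interior)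
  qed
next
  let ?\<sigma> = "sv k d x" and ?S = "SS k d (sv k d x)"
  show "rel_interior ?S \<subseteq> {y \<in> vspace (n (k - 1)). sv k d y = sv k d x}"
  proof
    fix y assume yr: "y \<in> rel_interior ?S"
    then obtain T where T: "y \<in> ?S" "open T" "y \<in> T" "T \<inter> affine hull ?S \<subseteq> ?S"
      by (auto simp: rel_interior)
    have yv: "y \<in> vspace (n (k - 1))" using T(1) by (simp add: SS_def)
    have xS: "x \<in> ?S" using SS_self[OF x] .
    have "sv k d y l = ?\<sigma> l" for l
    proof (cases "l \<in> ndset k d")
      case False then show ?thesis by (simp add: sv_def)
    next
      case l: True
      have cy: "cnd (?\<sigma> l) (NM k l y)" using T(1) l by (simp add: SS_def)
      show ?thesis
      proof (cases "NM k l y = 0")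
        case False
        then show ?thesis using cy l by (auto simp: sv_def cnd_def sgn_real_def split: if_splits)
      next
        case yz: True
        show ?thesis
        proof (rule ccontr)
          assume ne: "sv k d y l \<noteq> ?\<sigma> l"
          then have xnz: "NM k l x \<noteq> 0" using yz l by (auto simp: sv_def)
          define p where "p t = y + t *\<^sub>R (y - x)" for t :: real
          have pc: "continuous_on UNIV p"
            unfolding p_def by (intro continuous_on_coordinatewise_then_product) (auto intro!: continuous_intros)
          have "open (p -` T)" using continuous_on_open_vimage[of UNIV p] pc T(2) by auto
          moreover have "0 \<in> p -` T" using T(3) by (simp add: p_def)
          ultimately obtain e where e: "e > 0" "\<forall>t. dist t 0 < e \<longrightarrow> t \<in> p -` T"
            by (metis open_dist)
          let ?t = "e / 2"
          have pT: "p ?t \<in> T" using e by auto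
          have "p ?t = (1 + ?t) *\<^sub>R y + (- ?t) *\<^sub>R x"
            by (simp add: p_def algebra_simps)
          moreover have "(1 + ?t) *\<^sub>R y + (- ?t) *\<^sub>R x \<in> affine hull ?S"
            by (rule mem_affine[OF affine_affine_hull]) (use T(1) xS in \<open>auto intro: hull_inc\<close>)
          ultimately have pS: "p ?t \<in> ?S" using pT T(4) by auto
          have sl: "snd l < n (fst l)" using l by (auto simp: ndset_def)
          have "NM k l (p ?t) = PN k l ?\<sigma> (p ?t)" using SS_NM_PN[OF pS l] .
          also have "\<dots> = PN k l ?\<sigma> y + ?t * (PN k l ?\<sigma> y - PN k l ?\<sigma> x)"
            using PN_expand[OF sl, of k ?\<sigma> y ?t "y - x"] PN_diff[OF sl, of k ?\<sigma> y x] by (simp add: p_def)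
          also have "\<dots> = - ?t * NM k l x"
            using SS_NM_PN[OF T(1) l] SS_NM_PN[OF xS l] yz by (simp add: algebra_simps)
          finally have "NM k l (p ?t) = - ?t * NM k l x" .
          moreover have "cnd (?\<sigma> l) (NM k l (p ?t))" using pS l by (simp add: SS_def)
          moreover have "?\<sigma> l = sgn (NM k l x)" using l by (simp add: sv_def)
          moreover have "?t > 0" using e(1) by simp
          ultimately show False using cnd_neg[OF xnz] by metis
        qed
      qed
    qed
    then show "y \<in> {y \<in> vspace (n (k - 1)). sv k d y = sv k d x}" using yv by auto
  qed
qed

lemma tangent_SS:
  assumes x: "x \<in> vspace (n (k - 1))"
  shows "tangent (SS k d (sv k d x)) = TT k d x"
proof
  let ?\<sigma> = "sv k d x" and ?S = "SS k d (sv k d x)"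
  show "tangent ?S \<subseteq> TT k d x"
    unfolding tangent_def
  proof (rule real_vector.span_minimal)
    show "subspace (TT k d x)" unfolding TT_def by (rule kerset_subspace) (simp add: lf_lin)
    show "{y - z |y z. y \<in> ?S \<and> z \<in> ?S} \<subseteq> TT k d x"
    proof clarify
      fix y z assume y: "y \<in> ?S" and z: "z \<in> ?S"
      have "lin k l ?\<sigma> (y - z) = 0" if l: "l \<in> Zs k d x" for l
      proof -
        have l': "l \<in> ndset k d" using l by (simp add: Zs_def)
        have sl: "snd l < n (fst l)" using l' by (auto simp: ndset_def)
        have "NM k l y = 0" "NM k l z = 0" using y z l by (auto simp: SS_def Zs_def sv_def cnd_def)
        then show ?thesis using PN_diff[OF sl, of k ?\<sigma> y z] SS_NM_PN[OF y l'] SS_NM_PN[OF z l'] by simp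
      qed
      moreover have "y - z \<in> vspace (n (k - 1))" using y z by (auto simp: SS_def vspace_def)
      ultimately show "y - z \<in> TT k d x" by (simp add: TT_def kerset_def)
    qed
  qed
next
  let ?\<sigma> = "sv k d x" and ?S = "SS k d (sv k d x)"
  show "TT k d x \<subseteq> tangent ?S"
  proof
    fix v assume v: "v \<in> TT k d x"
    have vv: "v \<in> vspace (n (k - 1))" using v by (simp add: TT_def kerset_def)
    have "\<forall>l\<in>ndset k d. NM k l x = 0 \<longrightarrow> sgn (lin k l ?\<sigma> v) = ?\<sigma> l"
      using v by (auto simp: TT_def kerset_def Zs_def sv_def)
    moreover have "\<forall>l\<in>ndset k d. NM k l x \<noteq> 0 \<longrightarrow> ?\<sigma> l = sgn (NM k l x)" by (simp add: sv_def)
    ultimately obtain e where e: "e > 0" "x + e *\<^sub>R v \<in> vspace (n (k - 1))"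
      "\<forall>l\<in>ndset k d. sgn (NM k l (x + e *\<^sub>R v)) = ?\<sigma> l"
      using SMALL[OF x vv] by blast
    have yS: "x + e *\<^sub>R v \<in> ?S" using sv_eq_SS[OF e(2) e(3)] .
    have "(x + e *\<^sub>R v) - x \<in> {y - z |y z. y \<in> ?S \<and> z \<in> ?S}" using yS SS_self[OF x] by blast
    then have "(1 / e) *\<^sub>R ((x + e *\<^sub>R v) - x) \<in> tangent ?S"
      unfolding tangent_def by (intro real_vector.span_scale real_vector.span_base)
    then show "v \<in> tangent ?S" using e(1) by simp
  qed
qed

end

lemma cnd_sgn_eq: "sgn t = sgn t' \<Longrightarrow> cnd t v = cnd t' v"
  by (auto simp: cnd_def sgn_real_def split: if_splits)

context net begin

definition rho :: "(nat \<times> nat \<Rightarrow> real) \<Rightarrow> nat \<Rightarrow> nat \<Rightarrow> int" where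
  "rho \<tau> i j = (if \<tau> (i, j) > 0 then 1 else if \<tau> (i, j) < 0 then -1 else 0)"

lemma rho_cnd: "((rho \<tau> i j = 1 \<longrightarrow> v \<ge> 0) \<and> (rho \<tau> i j = -1 \<longrightarrow> v \<le> 0) \<and> (rho \<tau> i j = 0 \<longrightarrow> v = 0))
   \<longleftrightarrow> cnd (\<tau> (i, j)) v"
  by (auto simp: rho_def cnd_def)

lemma SS_split:
  "SS k (Suc d) \<tau> = SS k d \<tau> \<inter> apply_layers n W b k d -` arr_cell n W b (k + d) (rho \<tau> (k + d))"
proof -
  have "x \<in> SS k (Suc d) \<tau> \<longleftrightarrow> x \<in> SS k d \<tau> \<and> apply_layers n W b k d x \<in> arr_cell n W b (k + d) (rho \<tau> (k + d))"
    for x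
  proof -
    have A: "x \<in> SS k (Suc d) \<tau> \<longleftrightarrow> x \<in> SS k d \<tau> \<and> (\<forall>j<n (k + d). cnd (\<tau> (k + d, j)) (NM k (k + d, j) x))"
      by (auto simp: SS_def ndset_def less_Suc_eq)
    have B: "x \<in> vspace (n (k - 1)) \<Longrightarrow> apply_layers n W b k d x \<in> vspace (n (k + d - 1))"
      by (rule AL_vspace)
    show ?thesis unfolding A arr_cell_def using B rho_cnd
      by (auto simp: SS_def NM_def)
  qed
  then show ?thesis by auto
qed

lemma SS_cong: "(\<forall>l\<in>ndset k d. \<tau> l = \<tau>' l) \<Longrightarrow> SS k d \<tau> = SS k d \<tau>'"
  by (auto simp: SS_def)

lemma arr_cell_cong: "(\<forall>j<n i. \<rho> j = \<rho>' j) \<Longrightarrow> arr_cell n W b i \<rho> = arr_cell n W b i \<rho>'"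
  by (auto simp: arr_cell_def)

lemma canon_SS: "canon_from n W b k d = {SS k d \<tau> | \<tau>. SS k d \<tau> \<noteq> {}}"
proof (induction d)
  case 0
  have "SS k 0 \<tau> = vspace (n (k - 1))" for \<tau> by (auto simp: SS_def ndset_def)
  moreover have "vspace (n (k - 1)) \<noteq> {}" by (auto simp: vspace_def)
  ultimately show ?case by auto
next
  case (Suc d)
  show ?case
  proof
    show "canon_from n W b k (Suc d) \<subseteq> {SS k (Suc d) \<tau> |\<tau>. SS k (Suc d) \<tau> \<noteq> {}}"
    proof
      fix X assume "X \<in> canon_from n W b k (Suc d)"
      then obtain C R where X: "X = C \<inter> apply_layers n W b k d -` R" "C \<in> canon_from n W b k d"
        "R \<in> arrangement n W b (k + d)" "X \<noteq> {}" by auto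
      obtain \<tau> where C: "C = SS k d \<tau>" using X(2) Suc.IH by auto
      obtain \<rho> where R: "R = arr_cell n W b (k + d) \<rho>" "\<forall>j<n (k + d). \<rho> j \<in> {-1, 0, 1}"
        using X(3) by (auto simp: arrangement_def)
      define \<tau>' where "\<tau>' l = (if fst l = k + d then of_int (\<rho> (snd l)) else \<tau> l)" for l
      have "SS k d \<tau>' = SS k d \<tau>" by (rule SS_cong) (auto simp: \<tau>'_def ndset_def)
      moreover have "arr_cell n W b (k + d) (rho \<tau>' (k + d)) = arr_cell n W b (k + d) \<rho>"
        by (rule arr_cell_cong) (use R(2) in \<open>auto simp: rho_def \<tau>'_def\<close>)
      ultimately have "X = SS k (Suc d) \<tau>'" using SS_split[of k d \<tau>'] X(1) C R(1) by simp
      then show "X \<in> {SS k (Suc d) \<tau> |\<tau>. SS k (Suc d) \<tau> \<noteq> {}}" using X(4) by auto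
    qed
  next
    show "{SS k (Suc d) \<tau> |\<tau>. SS k (Suc d) \<tau> \<noteq> {}} \<subseteq> canon_from n W b k (Suc d)"
    proof clarify
      fix \<tau> assume ne: "SS k (Suc d) \<tau> \<noteq> {}"
      have eq: "SS k (Suc d) \<tau> = SS k d \<tau> \<inter> apply_layers n W b k d -` arr_cell n W b (k + d) (rho \<tau> (k + d))"
        by (rule SS_split)
      have "SS k d \<tau> \<in> canon_from n W b k d" using Suc.IH ne eq by auto
      moreover have "arr_cell n W b (k + d) (rho \<tau> (k + d)) \<in> arrangement n W b (k + d)"
      proof -
        have "\<forall>j<n (k + d). rho \<tau> (k + d) j \<in> {-1, 0, 1}" by (auto simp: rho_def)
        moreover have "arr_cell n W b (k + d) (rho \<tau> (k + d)) \<noteq> {}" using ne eq by auto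
        ultimately show ?thesis unfolding arrangement_def by blast
      qed
      ultimately show "SS k (Suc d) \<tau> \<in> canon_from n W b k (Suc d)"
        using ne unfolding canon_from.simps eq by blast
    qed
  qed
qed

lemma arr_cell_SS1: "arr_cell n W b k (rho \<tau> k) = SS k 1 \<tau>"
proof -
  have "SS k 1 \<tau> = SS k 0 \<tau> \<inter> apply_layers n W b k 0 -` arr_cell n W b k (rho \<tau> k)"
    using SS_split[of k 0 \<tau>] by simp
  moreover have "SS k 0 \<tau> = vspace (n (k - 1))" by (auto simp: SS_def ndset_def)
  moreover have "arr_cell n W b k (rho \<tau> k) \<subseteq> vspace (n (k - 1))" by (auto simp: arr_cell_def)
  ultimately show ?thesis by auto
qed

lemma lf_rowl: "lf (\<lambda>v. rowl i v j)"
  by (simp add: lf_def rowl_add rowl_scale)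

lemma tangent_hyp:
  assumes J: "J \<subseteq> {..<n i}" and ne: "hyperplane_nodes n W b i J \<noteq> {}"
  shows "tangent (hyperplane_nodes n W b i J) = kerset (n (i - 1)) (\<lambda>j v. rowl i v j) J"
proof
  let ?H = "hyperplane_nodes n W b i J"
  have Heq: "?H = {x \<in> vspace (n (i - 1)). \<forall>j\<in>J. rowl i x j + b i j = 0}"
    using J by (auto simp: hyperplane_nodes_def aff_eq)
  show "tangent ?H \<subseteq> kerset (n (i - 1)) (\<lambda>j v. rowl i v j) J"
    unfolding tangent_def
  proof (rule real_vector.span_minimal)
    show "subspace (kerset (n (i - 1)) (\<lambda>j v. rowl i v j) J)"
      by (rule kerset_subspace) (simp add: lf_rowl)
    show "{y - z |y z. y \<in> ?H \<and> z \<in> ?H} \<subseteq> kerset (n (i - 1)) (\<lambda>j v. rowl i v j) J"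
    proof clarify
      fix y z assume y: "y \<in> ?H" and z: "z \<in> ?H"
      have "rowl i (y - z) j = rowl i y j - rowl i z j" for j
        using lf_diff[OF lf_rowl] by blast
      moreover have "rowl i y j = rowl i z j" if j: "j \<in> J" for j
      proof -
        have "rowl i y j + b i j = 0" "rowl i z j + b i j = 0" using y z j unfolding Heq by auto
        then show ?thesis by simp
      qed
      moreover have "y - z \<in> vspace (n (i - 1))" using y z unfolding Heq by (auto simp: vspace_def)
      ultimately show "y - z \<in> kerset (n (i - 1)) (\<lambda>j v. rowl i v j) J"
        by (auto simp: kerset_def)
    qed
  qed
  show "kerset (n (i - 1)) (\<lambda>j v. rowl i v j) J \<subseteq> tangent ?H"
  proof
    fix v assume v: "v \<in> kerset (n (i - 1)) (\<lambda>j v. rowl i v j) J"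
    obtain p where p: "p \<in> ?H" using ne by auto
    have "p + v \<in> ?H" using p v unfolding Heq by (auto simp: kerset_def vspace_def rowl_add)
    then have "(p + v) - p \<in> {y - z |y z. y \<in> ?H \<and> z \<in> ?H}" using p by blast
    then show "v \<in> tangent ?H" unfolding tangent_def by (auto intro: real_vector.span_base)
  qed
qed

lemma layer_surj:
  assumes gen: "generic_net m n W b" and i: "i \<in> {1..m+1}" and J: "J \<subseteq> {..<n i}"
    and ne: "hyperplane_nodes n W b i J \<noteq> {}"
  shows "\<forall>c. \<exists>v\<in>vspace (n (i - 1)). \<forall>j\<in>J. rowl i v j = c j"
proof (rule dim_surj)
  show "finite J" using J finite_subset by blast
  show "\<forall>j\<in>J. lf (\<lambda>v. rowl i v j)" by (simp add: lf_rowl)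
  show "\<forall>J'\<subseteq>J. dim (kerset (n (i - 1)) (\<lambda>j v. rowl i v j) J') + card J' = n (i - 1)"
  proof (intro allI impI)
    fix J' assume J': "J' \<subseteq> J"
    have ne': "hyperplane_nodes n W b i J' \<noteq> {}"
      using ne J' by (auto simp: hyperplane_nodes_def)
    have J'n: "J' \<subseteq> {..<n i}" using J J' by auto
    have g: "(card J' \<le> n (i - 1) \<longrightarrow> hyperplane_nodes n W b i J' \<noteq> {} \<and>
              affdim (hyperplane_nodes n W b i J') = n (i - 1) - card J') \<and>
             (card J' > n (i - 1) \<longrightarrow> hyperplane_nodes n W b i J' = {})"
      using gen i J'n unfolding generic_net_def by blast
    then have c: "card J' \<le> n (i - 1)" using ne' by force
    then have "affdim (hyperplane_nodes n W b i J') = n (i - 1) - card J'" using g by blast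
    then have "dim (kerset (n (i - 1)) (\<lambda>j v. rowl i v j) J') = n (i - 1) - card J'"
      unfolding affdim_def tangent_hyp[OF J'n ne'] .
    then show "dim (kerset (n (i - 1)) (\<lambda>j v. rowl i v j) J') + card J' = n (i - 1)" using c by simp
  qed
qed

lemma REF:
  assumes t: "t \<in> TT k d y"
    and ref: "\<forall>l\<in>ndset k d. NM k l y \<noteq> 0 \<longrightarrow> \<tau> l = sgn (NM k l y)"
  shows "\<forall>l\<in>ndset k d. lin k l \<tau> t = lin k l (sv k d y) t"
proof -
  let ?\<sigma> = "sv k d y"
  have L: "e \<le> d \<Longrightarrow> LPA k e \<tau> t = LPA k e ?\<sigma> t" for e
  proof (induction e)
    case 0 then show ?case by simp
  next
    case (Suc e)
    have IH: "LPA k e \<tau> t = LPA k e ?\<sigma> t" using Suc by simp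
    show ?case
    proof (rule ext)
      fix j
      show "LPA k (Suc e) \<tau> t j = LPA k (Suc e) ?\<sigma> t j"
      proof (cases "j < n (k + e)")
        case False then show ?thesis by simp
      next
        case True
        then have l: "(k + e, j) \<in> ndset k d" using Suc.prems by (auto simp: ndset_def)
        show ?thesis
        proof (cases "NM k (k + e, j) y = 0")
          case False
          then have "\<tau> (k + e, j) = ?\<sigma> (k + e, j)" using ref l by (simp add: sv_def)
          then show ?thesis using IH by simp
        next
          case True
          then have "(k + e, j) \<in> Zs k d y" using l by (simp add: Zs_def)
          then have "lin k (k + e, j) ?\<sigma> t = 0" using t by (simp add: TT_def kerset_def)
          then have "rowl (k + e) (LPA k e ?\<sigma> t) j = 0" by (simp add: lin_def)
          then show ?thesis using IH by simp
        qed
      qed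
    qed
  qed
  show ?thesis
  proof
    fix l assume "l \<in> ndset k d"
    then have "fst l - k \<le> d" by (auto simp: ndset_def)
    then show "lin k l \<tau> t = lin k l ?\<sigma> t" using L by (simp add: lin_def)
  qed
qed

lemma dlayer_LPA:
  assumes ref: "\<forall>j<n k. aff_layer n W b k x j \<noteq> 0 \<longrightarrow> \<tau> (k, j) = sgn (aff_layer n W b k x j)"
    and w: "\<forall>j<n k. aff_layer n W b k x j = 0 \<longrightarrow> rowl k w j = 0"
  shows "dlayer n W b k x w = LPA k 1 \<tau> w"
proof (rule ext)
  fix j
  show "dlayer n W b k x w j = LPA k 1 \<tau> w j"
  proof (cases "j < n k")
    case False then show ?thesis by (simp add: dlayer_def)
  next
    case True
    show ?thesis
    proof (cases "aff_layer n W b k x j = 0")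
      case True
      then show ?thesis using w \<open>j < n k\<close> by (simp add: dlayer_def)
    next
      case False
      then show ?thesis using ref \<open>j < n k\<close>
        by (auto simp: dlayer_def rowl_def sgn_real_def)
    qed
  qed
qed

end

context net begin

definition Surj where
  "Surj k d \<longleftrightarrow> (\<forall>x\<in>vspace (n (k - 1)). \<forall>\<tau>.
     (\<forall>l\<in>ndset k d. NM k l x \<noteq> 0 \<longrightarrow> \<tau> l = sgn (NM k l x)) \<longrightarrow>
     (\<forall>c. \<exists>v\<in>vspace (n (k - 1)). \<forall>l\<in>Zs k d x. lin k l \<tau> v = c l))"

lemma Surj1:
  assumes gen: "generic_net m n W b" and k: "k \<in> {1..m+1}"
  shows "Surj k 1"
  unfolding Surj_def
proof (intro ballI allI impI)
  fix x \<tau> c assume x: "x \<in> vspace (n (k - 1))"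
  let ?J = "{j. j < n k \<and> aff_layer n W b k x j = 0}"
  have "x \<in> hyperplane_nodes n W b k ?J" using x by (simp add: hyperplane_nodes_def)
  then have ls: "\<forall>c. \<exists>v\<in>vspace (n (k - 1)). \<forall>j\<in>?J. rowl k v j = c j"
    by (intro layer_surj[OF gen k]) auto
  obtain v where v: "v \<in> vspace (n (k - 1))" "\<forall>j\<in>?J. rowl k v j = c (k, j)"
    using ls[rule_format, of "\<lambda>j. c (k, j)"] by blast
  have "lin k l \<tau> v = c l" if l: "l \<in> Zs k 1 x" for l
  proof -
    obtain j where lj: "l = (k, j)" "j < n k" using l by (cases l) (auto simp: Zs_def ndset_def le_less_Suc_eq)
    then have "aff_layer n W b k x j = 0" using l by (simp add: Zs_def NM_first)
    then show ?thesis using v lj by (simp add: lin_first)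
  qed
  then show "\<exists>v\<in>vspace (n (k - 1)). \<forall>l\<in>Zs k 1 x. lin k l \<tau> v = c l" using v(1) by blast
qed

lemma Surj_step:
  assumes gen: "generic_net m n W b" and st: "supertransversal m n W b"
    and k: "k \<in> {1..m}" and kd: "Suc k + d = m + 2" and IH: "Surj (Suc k) d"
  shows "Surj k (Suc d)"
  unfolding Surj_def
proof (intro ballI allI impI)
  fix x \<tau> c assume x: "x \<in> vspace (n (k - 1))"
    and ref: "\<forall>l\<in>ndset k (Suc d). NM k l x \<noteq> 0 \<longrightarrow> \<tau> l = sgn (NM k l x)"
  define y where "y = relu_layer n W b k x"
  have yv: "y \<in> vspace (n (Suc k - 1))" using relu_vspace by (simp add: y_def)
  let ?J = "{j. j < n k \<and> aff_layer n W b k x j = 0}"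
  have k1: "k \<in> {1..m+1}" using k by auto
  have "x \<in> hyperplane_nodes n W b k ?J" using x by (simp add: hyperplane_nodes_def)
  then have ls: "\<forall>c. \<exists>v\<in>vspace (n (k - 1)). \<forall>j\<in>?J. rowl k v j = c j"
    by (intro layer_surj[OF gen k1]) auto
  obtain v0 where v0: "v0 \<in> vspace (n (k - 1))" "\<forall>j\<in>?J. rowl k v0 j = c (k, j)"
    using ls[rule_format, of "\<lambda>j. c (k, j)"] by blast
  have ref': "\<forall>l\<in>ndset (Suc k) d. NM (Suc k) l y \<noteq> 0 \<longrightarrow> \<tau> l = sgn (NM (Suc k) l y)"
  proof (intro ballI impI)
    fix l assume l: "l \<in> ndset (Suc k) d" and nz: "NM (Suc k) l y \<noteq> 0"
    have "k < fst l" using l by (auto simp: ndset_def)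
    then have "NM (Suc k) l y = NM k l x" using NM_peel by (simp add: y_def)
    moreover have "l \<in> ndset k (Suc d)" using l ndset_Suc by blast
    ultimately show "\<tau> l = sgn (NM (Suc k) l y)" using ref nz by simp
  qed
  define c' where "c' l = c l - lin (Suc k) l \<tau> (LPA k 1 \<tau> v0)" for l
  obtain u where u: "u \<in> vspace (n (Suc k - 1))" "\<forall>l\<in>Zs (Suc k) d y. lin (Suc k) l \<tau> u = c' l"
    using IH yv ref' unfolding Surj_def by blast
  define C where "C = arr_cell n W b k (rho (sv k 1 x) k)"
  define D where "D = SS (Suc k) d (sv (Suc k) d y)"
  have CS: "C = SS k 1 (sv k 1 x)" unfolding C_def by (rule arr_cell_SS1)
  have xC: "x \<in> C" using CS SS_self[OF x] by simp
  have Carr: "C \<in> arrangement n W b k"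
  proof -
    have "\<forall>j<n k. rho (sv k 1 x) k j \<in> {-1, 0, 1}" by (auto simp: rho_def)
    then show ?thesis using xC unfolding C_def arrangement_def by blast
  qed
  have yD: "y \<in> D" unfolding D_def using SS_self[OF yv] .
  have Dcan: "D \<in> canon_from n W b (k + 1) (m + 1 - k)"
  proof -
    have "m + 1 - k = d" using kd by simp
    then show ?thesis using yD canon_SS[of "Suc k" d] unfolding D_def by auto
  qed
  have tr: "transverse_on n W b k C D" using st k Carr Dcan unfolding supertransversal_def by blast
  have xri: "x \<in> rel_interior C" using relint_SS[OF x, of 1] CS x by simp
  have yri: "relu_layer n W b k x \<in> rel_interior D"
    using relint_SS[OF yv, of d] yv unfolding D_def y_def[symmetric] by simp
  have sums: "{a + w | a w. a \<in> dlayer n W b k x ` tangent C \<and> w \<in> tangent D} = vspace (n k)"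
    using tr xri yri unfolding transverse_on_def by blast
  have "u \<in> vspace (n k)" using u by simp
  then obtain w' w where ww: "u = dlayer n W b k x w' + w" "w' \<in> tangent C" "w \<in> tangent D"
    unfolding sums[symmetric] by blast
  have w'T: "w' \<in> TT k 1 x" using ww(2) tangent_SS[OF x, of 1] CS by simp
  have wT: "w \<in> TT (Suc k) d y" using ww(3) tangent_SS[OF yv, of d] unfolding D_def by simp
  have w'v: "w' \<in> vspace (n (k - 1))" using w'T by (simp add: TT_def kerset_def)
  have w'J: "rowl k w' j = 0" if j: "j \<in> ?J" for j
  proof -
    have "(k, j) \<in> Zs k 1 x" using j by (simp add: Zs_def ndset_def NM_first)
    then have "lin k (k, j) (sv k 1 x) w' = 0" using w'T by (simp add: TT_def kerset_def)
    then show ?thesis by (simp add: lin_first)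
  qed
  have dl: "dlayer n W b k x w' = LPA k 1 \<tau> w'"
  proof (rule dlayer_LPA)
    show "\<forall>j<n k. aff_layer n W b k x j \<noteq> 0 \<longrightarrow> \<tau> (k, j) = sgn (aff_layer n W b k x j)"
    proof (intro allI impI)
      fix j assume "j < n k" "aff_layer n W b k x j \<noteq> 0"
      moreover have "(k, j) \<in> ndset k (Suc d)" using \<open>j < n k\<close> by (simp add: ndset_def)
      ultimately show "\<tau> (k, j) = sgn (aff_layer n W b k x j)" using ref by (simp add: NM_first)
    qed
    show "\<forall>j<n k. aff_layer n W b k x j = 0 \<longrightarrow> rowl k w' j = 0" using w'J by simp
  qed
  have wz: "lin (Suc k) l \<tau> w = 0" if l: "l \<in> Zs (Suc k) d y" for l
  proof -
    have l': "l \<in> ndset (Suc k) d" using l by (simp add: Zs_def)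
    have "lin (Suc k) l \<tau> w = lin (Suc k) l (sv (Suc k) d y) w" using REF[OF wT ref'] l' by blast
    also have "\<dots> = 0" using wT l by (simp add: TT_def kerset_def)
    finally show ?thesis .
  qed
  have key: "lin (Suc k) l \<tau> (LPA k 1 \<tau> w') = c' l" if l: "l \<in> Zs (Suc k) d y" for l
  proof -
    have "c' l = lin (Suc k) l \<tau> u" using u l by simp
    also have "\<dots> = lin (Suc k) l \<tau> (LPA k 1 \<tau> w') + lin (Suc k) l \<tau> w"
      using ww(1) dl lf_add[OF lf_lin] by simp
    finally show ?thesis using wz[OF l] by simp
  qed
  let ?v = "v0 + w'"
  have vv: "?v \<in> vspace (n (k - 1))" using v0 w'v by (auto simp: vspace_def)
  have "lin k l \<tau> ?v = c l" if l: "l \<in> Zs k (Suc d) x" for l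
  proof (cases "fst l = k")
    case True
    obtain j where lj: "l = (k, j)" "j < n k" using l True by (cases l) (auto simp: Zs_def ndset_def)
    then have "j \<in> ?J" using l by (simp add: Zs_def NM_first)
    then show ?thesis using lj v0 w'J by (simp add: lin_first rowl_add)
  next
    case False
    have l1: "l \<in> ndset k (Suc d)" "NM k l x = 0" using l by (auto simp: Zs_def)
    then have kl: "k < fst l" using False by (auto simp: ndset_def)
    have l2: "l \<in> ndset (Suc k) d" using l1(1) kl ndset_Suc by auto
    have "NM (Suc k) l y = 0" using l1(2) NM_peel[OF kl] by (simp add: y_def)
    then have lZ: "l \<in> Zs (Suc k) d y" using l2 by (simp add: Zs_def)
    have "lin k l \<tau> ?v = lin (Suc k) l \<tau> (LPA k 1 \<tau> ?v)" using lin_peel[OF kl] .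
    also have "\<dots> = lin (Suc k) l \<tau> (LPA k 1 \<tau> v0) + lin (Suc k) l \<tau> (LPA k 1 \<tau> w')"
      by (simp only: LPA_add lf_add[OF lf_lin])
    also have "\<dots> = c l" using key[OF lZ] by (simp add: c'_def)
    finally show ?thesis .
  qed
  then show "\<exists>v\<in>vspace (n (k - 1)). \<forall>l\<in>Zs k (Suc d) x. lin k l \<tau> v = c l" using vv by blast
qed

lemma Surj_all:
  assumes gen: "generic_net m n W b" and st: "supertransversal m n W b"
  shows "k + d = m + 2 \<Longrightarrow> 1 \<le> k \<Longrightarrow> 1 \<le> d \<Longrightarrow> Surj k d"
proof (induction d arbitrary: k)
  case 0 then show ?case by simp
next
  case (Suc d)
  show ?case
  proof (cases "d = 0")
    case True
    then show ?thesis using Surj1[OF gen] Suc.prems by auto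
  next
    case False
    have "Surj (Suc k) d" using Suc.IH[of "Suc k"] Suc.prems False by simp
    moreover have "k \<in> {1..m}" using Suc.prems False by auto
    ultimately show ?thesis using Surj_step[OF gen st] Suc.prems by simp
  qed
qed

end

lemma dim_pos:
  assumes "subspace S" "S \<subseteq> vspace N" "v \<in> S" "v \<noteq> 0"
  shows "dim S \<ge> 1"
proof -
  have "\<exists>q. v q \<noteq> 0"
  proof (rule ccontr)
    assume "\<not> ?thesis"
    then have "v = 0" by (auto simp: fun_eq_iff)
    with assms(4) show False by simp
  qed
  then obtain q where q: "v q \<noteq> 0" by blast
  have "lf (\<lambda>w. w q)" by (simp add: lf_def)
  then have "dim S = Suc (dim {w\<in>S. w q = 0})" using one_functional[OF assms(1,2)] assms(3) q by blast
  then show ?thesis by simp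
qed

context net begin

lemma TT_zero: "v \<in> TT k d x \<Longrightarrow> l \<in> Zs k d x \<Longrightarrow> lin k l (sv k d x) v = 0"
  unfolding TT_def kerset_def by blast

lemma dim_formula:
  assumes gen: "generic_net m n W b" and st: "supertransversal m n W b" and x: "x \<in> vspace (n 0)"
  shows "dim (TT 1 (m + 1) x) + card (Zs 1 (m + 1) x) = n 0"
proof -
  have S: "Surj 1 (m + 1)" using Surj_all[OF gen st] by simp
  have "\<forall>c. \<exists>v\<in>vspace (n 0). \<forall>l\<in>Zs 1 (m + 1) x. lin 1 l (sv 1 (m + 1) x) v = c l"
    using S x unfolding Surj_def by (simp add: sv_def)
  moreover have "finite (Zs 1 (m + 1) x)" using finite_ndset by (simp add: Zs_def)
  ultimately have "dim (kerset (n 0) (\<lambda>l. lin 1 l (sv 1 (m + 1) x)) (Zs 1 (m + 1) x)) + card (Zs 1 (m + 1) x) = n 0"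
    by (intro surj_dim) (auto simp: lf_lin)
  then show ?thesis by (simp add: TT_def)
qed

lemma layer1_inj:
  assumes gen: "generic_net m n W b" and n01: "n 0 \<le> n 1"
    and v: "v \<in> vspace (n 0)" "v \<noteq> 0"
  shows "\<exists>j<n 0. rowl 1 v j \<noteq> 0"
proof (rule ccontr)
  assume "\<not> ?thesis"
  then have vK: "v \<in> kerset (n 0) (\<lambda>j v. rowl 1 v j) {..<n 0}" using v by (auto simp: kerset_def)
  have J: "{..<n 0} \<subseteq> {..<n 1}" using n01 by auto
  have g: "(card {..<n 0} \<le> n (1 - 1) \<longrightarrow> hyperplane_nodes n W b 1 {..<n 0} \<noteq> {} \<and>
            affdim (hyperplane_nodes n W b 1 {..<n 0}) = n (1 - 1) - card {..<n 0})"
    using gen J unfolding generic_net_def by auto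
  then have ne: "hyperplane_nodes n W b 1 {..<n 0} \<noteq> {}" and ad: "affdim (hyperplane_nodes n W b 1 {..<n 0}) = 0"
    by auto
  have "dim (kerset (n 0) (\<lambda>j v. rowl 1 v j) {..<n 0}) = 0"
    using ad unfolding affdim_def tangent_hyp[OF J ne] by simp
  moreover have "dim (kerset (n 0) (\<lambda>j v. rowl 1 v j) {..<n 0}) \<ge> 1"
    by (rule dim_pos[OF kerset_subspace _ vK v(2)]) (auto simp: lf_rowl kerset_def)
  ultimately show False by simp
qed

lemma walk:
  assumes gen: "generic_net m n W b" and st: "supertransversal m n W b" and n01: "n 0 \<le> n 1"
  shows "\<forall>x\<in>vspace (n 0). n 0 - card (Zs 1 (m + 1) x) = r \<longrightarrow>
    (\<exists>x'\<in>vspace (n 0). (\<forall>l\<in>ndset 1 (m + 1). NM 1 l x' \<noteq> 0 \<longrightarrow> sgn (NM 1 l x') = sgn (NM 1 l x))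
      \<and> card (Zs 1 (m + 1) x') = n 0)"
proof (induction r rule: less_induct)
  case (less r)
  show ?case
  proof (intro ballI impI)
    fix x assume x: "x \<in> vspace (n 0)" and r: "n 0 - card (Zs 1 (m + 1) x) = r"
    let ?N = "ndset 1 (m + 1)" and ?\<sigma> = "sv 1 (m + 1) x"
    have df: "dim (TT 1 (m + 1) x) + card (Zs 1 (m + 1) x) = n 0" using dim_formula[OF gen st x] .
    show "\<exists>x'\<in>vspace (n 0). (\<forall>l\<in>?N. NM 1 l x' \<noteq> 0 \<longrightarrow> sgn (NM 1 l x') = sgn (NM 1 l x))
      \<and> card (Zs 1 (m + 1) x') = n 0"
    proof (cases "r = 0")
      case True
      then show ?thesis using x r df by (intro bexI[of _ x]) auto
    next
      case False
      then have dpos: "dim (TT 1 (m + 1) x) \<ge> 1" using r df by simp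
      have TTsub: "subspace (TT 1 (m + 1) x)" unfolding TT_def by (rule kerset_subspace) (simp add: lf_lin)
      obtain v where v: "v \<in> TT 1 (m + 1) x" "v \<noteq> 0"
      proof (rule ccontr)
        assume "\<not> thesis"
        then have "TT 1 (m + 1) x \<subseteq> {0}" using that by blast
        then have "dim (TT 1 (m + 1) x) \<le> dim {0::nat \<Rightarrow> real}"
          by (rule dim_mono_vs[of _ _ 0]) (auto simp: vspace_def)
        then show False using dpos dim_zero_set by simp
      qed
      have vv: "v \<in> vspace (n 0)" using v by (simp add: TT_def kerset_def)
      obtain j where j: "j < n 0" "rowl 1 v j \<noteq> 0" using layer1_inj[OF gen n01 vv v(2)] by blast
      let ?l0 = "(1::nat, j)"
      have l0: "?l0 \<in> ?N" using j n01 by (simp add: ndset_def)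
      have lin0: "lin 1 ?l0 ?\<sigma> v \<noteq> 0" using j by (simp add: lin_first)
      then have l0Z: "?l0 \<notin> Zs 1 (m + 1) x" using v by (auto simp: TT_def kerset_def)
      then have s0: "?\<sigma> ?l0 \<noteq> 0" using l0 by (simp add: Zs_def sv_def sgn_0_0)
      define v' where "v' = (if ?\<sigma> ?l0 * lin 1 ?l0 ?\<sigma> v < 0 then v else - v)"
      have v'T: "v' \<in> TT 1 (m + 1) x"
        using v TTsub by (auto simp: v'_def real_vector.subspace_neg)
      have v'v: "v' \<in> vspace (n 0)" using v'T by (simp add: TT_def kerset_def)
      have linv': "lin 1 l ?\<sigma> v' = (if ?\<sigma> ?l0 * lin 1 ?l0 ?\<sigma> v < 0 then 1 else -1) * lin 1 l ?\<sigma> v" for l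
        using lf_scale[OF lf_lin, of 1 l ?\<sigma> "-1" v] by (simp add: v'_def)
      have neg0: "?\<sigma> ?l0 * lin 1 ?l0 ?\<sigma> v' < 0"
        using s0 lin0 linv'[of ?l0] by (auto simp: mult_less_0_iff sgn_real_def sv_def split: if_splits)
      define B where "B = {l \<in> ?N. ?\<sigma> l * lin 1 l ?\<sigma> v' < 0}"
      have finB: "finite B" using finite_ndset by (simp add: B_def)
      have l0B: "?l0 \<in> B" using l0 neg0 by (simp add: B_def)
      define f where "f l = \<bar>NM 1 l x\<bar> / \<bar>lin 1 l ?\<sigma> v'\<bar>" for l
      define t where "t = Min (f ` B)"
      have tB: "t \<in> f ` B" unfolding t_def using finB l0B by (intro Min_in) auto
      then obtain ls where ls: "ls \<in> B" "t = f ls" by blast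
      have tle: "t \<le> f l" if "l \<in> B" for l unfolding t_def using finB that by simp
      have Bprop: "NM 1 l x \<noteq> 0 \<and> lin 1 l ?\<sigma> v' \<noteq> 0 \<and> l \<in> ?N" if "l \<in> B" for l
        using that by (auto simp: B_def sv_def)
      have tpos: "t > 0" using ls Bprop[OF ls(1)] by (simp add: f_def)
      have xS: "x \<in> SS 1 (m + 1) ?\<sigma>" using SS_self[of x 1] x by simp
      let ?x' = "x + t *\<^sub>R v'"
      have PNx': "PN 1 l ?\<sigma> ?x' = NM 1 l x + t * lin 1 l ?\<sigma> v'" if l: "l \<in> ?N" for l
        using PN_expand[of l 1 ?\<sigma> x t v'] SS_NM_PN[OF xS l] l by (auto simp: ndset_def)
      have val: "cnd (?\<sigma> l) (NM 1 l x + t * lin 1 l ?\<sigma> v') \<and>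
                 (NM 1 l x + t * lin 1 l ?\<sigma> v' \<noteq> 0 \<longrightarrow> sgn (NM 1 l x + t * lin 1 l ?\<sigma> v') = sgn (NM 1 l x))"
        if l: "l \<in> ?N" for l
      proof (cases "l \<in> Zs 1 (m + 1) x")
        case True
        then have "NM 1 l x = 0" "lin 1 l ?\<sigma> v' = 0" using TT_zero[OF v'T] by (auto simp: Zs_def)
        then show ?thesis by (simp add: cnd_zero)
      next
        case nZ: False
        then have nz: "NM 1 l x \<noteq> 0" using l by (simp add: Zs_def)
        have sl: "?\<sigma> l = sgn (NM 1 l x)" using l by (simp add: sv_def)
        show ?thesis
        proof (cases "l \<in> B")
          case False
          then have "?\<sigma> l * lin 1 l ?\<sigma> v' \<ge> 0" using l by (simp add: B_def)
          then have "sgn (NM 1 l x + t * lin 1 l ?\<sigma> v') = sgn (NM 1 l x)"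
          proof (cases "NM 1 l x > 0")
            case True
            then have "lin 1 l ?\<sigma> v' \<ge> 0" using \<open>?\<sigma> l * lin 1 l ?\<sigma> v' \<ge> 0\<close> sl by simp
            then have "t * lin 1 l ?\<sigma> v' \<ge> 0" using tpos by simp
            then show ?thesis using True by (simp add: sgn_real_def)
          next
            case False
            then have xn: "NM 1 l x < 0" using nz by simp
            then have "lin 1 l ?\<sigma> v' \<le> 0" using \<open>?\<sigma> l * lin 1 l ?\<sigma> v' \<ge> 0\<close> sl by simp
            then have "t * lin 1 l ?\<sigma> v' \<le> 0" using tpos by (simp add: mult_le_0_iff)
            then show ?thesis using xn by (simp add: sgn_real_def)
          qed
          then show ?thesis using sl by (auto intro: cnd_of_sgn)
        next
          case True
          have neg: "?\<sigma> l * lin 1 l ?\<sigma> v' < 0" using True by (simp add: B_def)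
          have "t \<le> \<bar>NM 1 l x\<bar> / \<bar>lin 1 l ?\<sigma> v'\<bar>" using tle[OF True] by (simp add: f_def)
          then have "t * \<bar>lin 1 l ?\<sigma> v'\<bar> \<le> \<bar>NM 1 l x\<bar>"
            using Bprop[OF True] by (simp add: field_simps)
          then have le: "\<bar>t * lin 1 l ?\<sigma> v'\<bar> \<le> \<bar>NM 1 l x\<bar>" using tpos by (simp add: abs_mult)
          show ?thesis
          proof (cases "NM 1 l x > 0")
            case True
            then have "lin 1 l ?\<sigma> v' < 0" using neg sl by (simp add: mult_less_0_iff)
            then have "t * lin 1 l ?\<sigma> v' < 0" using tpos by (simp add: mult_pos_neg)
            then have "NM 1 l x + t * lin 1 l ?\<sigma> v' \<ge> 0" using le True by linarith
            then show ?thesis using True sl by (auto simp: cnd_def sgn_real_def)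
          next
            case False
            then have xn: "NM 1 l x < 0" using nz by simp
            then have "lin 1 l ?\<sigma> v' > 0" using neg sl by (simp add: mult_less_0_iff)
            then have "t * lin 1 l ?\<sigma> v' > 0" using tpos by simp
            then have "NM 1 l x + t * lin 1 l ?\<sigma> v' \<le> 0" using le xn by linarith
            then show ?thesis using xn sl by (auto simp: cnd_def sgn_real_def)
          qed
        qed
      qed
      have "\<forall>l\<in>?N. cnd (?\<sigma> l) (PN 1 l ?\<sigma> ?x')" using val PNx' by simp
      then have eqN: "\<forall>l\<in>?N. NM 1 l ?x' = NM 1 l x + t * lin 1 l ?\<sigma> v'" using P2 PNx' by metis
      have x'v: "?x' \<in> vspace (n 0)" using x v'v by (auto simp: vspace_def)
      have sg: "\<forall>l\<in>?N. NM 1 l ?x' \<noteq> 0 \<longrightarrow> sgn (NM 1 l ?x') = sgn (NM 1 l x)" using eqN val by simp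
      have Zsub: "Zs 1 (m + 1) x \<subseteq> Zs 1 (m + 1) ?x'"
        using eqN TT_zero[OF v'T] by (auto simp: Zs_def)
      have lsZ: "ls \<in> Zs 1 (m + 1) ?x'"
      proof -
        have b: "NM 1 ls x \<noteq> 0" "lin 1 ls ?\<sigma> v' \<noteq> 0" "ls \<in> ?N" using Bprop[OF ls(1)] by auto
        have neg: "?\<sigma> ls * lin 1 ls ?\<sigma> v' < 0" using ls(1) by (simp add: B_def)
        have sl: "?\<sigma> ls = sgn (NM 1 ls x)" using b(3) by (simp add: sv_def)
        have "NM 1 ls x + t * lin 1 ls ?\<sigma> v' = 0"
        proof (cases "NM 1 ls x > 0")
          case True
          then have "lin 1 ls ?\<sigma> v' < 0" using neg sl by (simp add: mult_less_0_iff)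
          then show ?thesis using ls(2) True by (simp add: f_def field_simps)
        next
          case False
          then have xn: "NM 1 ls x < 0" using b(1) by simp
          then have "lin 1 ls ?\<sigma> v' > 0" using neg sl by (simp add: mult_less_0_iff)
          then show ?thesis using ls(2) xn by (simp add: f_def field_simps)
        qed
        then show ?thesis using eqN b(3) by (simp add: Zs_def)
      qed
      have lsn: "ls \<notin> Zs 1 (m + 1) x" using Bprop[OF ls(1)] by (simp add: Zs_def)
      have finZ: "finite (Zs 1 (m + 1) ?x')" using finite_ndset by (simp add: Zs_def)
      have "card (Zs 1 (m + 1) x) < card (Zs 1 (m + 1) ?x')"
        using Zsub lsZ lsn finZ by (metis psubsetI psubset_card_mono)
      moreover have "card (Zs 1 (m + 1) ?x') \<le> n 0" using dim_formula[OF gen st x'v] by simp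
      ultimately have lt: "n 0 - card (Zs 1 (m + 1) ?x') < r" using r df by simp
      obtain x'' where x'': "x'' \<in> vspace (n 0)"
        "\<forall>l\<in>?N. NM 1 l x'' \<noteq> 0 \<longrightarrow> sgn (NM 1 l x'') = sgn (NM 1 l ?x')"
        "card (Zs 1 (m + 1) x'') = n 0"
        using less.IH[OF lt] x'v by blast
      have "\<forall>l\<in>?N. NM 1 l x'' \<noteq> 0 \<longrightarrow> sgn (NM 1 l x'') = sgn (NM 1 l x)"
      proof (intro ballI impI)
        fix l assume l: "l \<in> ?N" and nz: "NM 1 l x'' \<noteq> 0"
        then have e1: "sgn (NM 1 l x'') = sgn (NM 1 l ?x')" using x''(2) by blast
        then have "NM 1 l ?x' \<noteq> 0" using nz by (auto simp: sgn_0_0)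
        then show "sgn (NM 1 l x'') = sgn (NM 1 l x)" using e1 sg l by simp
      qed
      then show ?thesis using x'' by blast
    qed
  qed
qed

end

lemma cube_mem: "p \<in> cube m n \<sigma> \<longleftrightarrow> (\<forall>l. l \<notin> nodes m n \<longrightarrow> p l = 0) \<and>
      (\<forall>l \<in> nodes m n. -1 \<le> p l \<and> p l \<le> 1 \<and> (\<sigma> l \<noteq> 0 \<longrightarrow> p l = \<sigma> l))"
  unfolding cube_def by (rule mem_Collect_eq)

lemma cube_sub:
  assumes s: "\<forall>l. \<sigma> l \<in> {-1, 0, 1}" and t: "\<forall>l. \<tau> l \<in> {-1, 0, 1}"
  shows "cube m n \<sigma> \<subseteq> cube m n \<tau> \<longleftrightarrow> (\<forall>l\<in>nodes m n. \<tau> l \<noteq> 0 \<longrightarrow> \<sigma> l = \<tau> l)"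
proof
  assume sub: "cube m n \<sigma> \<subseteq> cube m n \<tau>"
  show "\<forall>l\<in>nodes m n. \<tau> l \<noteq> 0 \<longrightarrow> \<sigma> l = \<tau> l"
  proof (intro ballI impI, rule ccontr)
    fix l assume l: "l \<in> nodes m n" and tl: "\<tau> l \<noteq> 0" and ne: "\<sigma> l \<noteq> \<tau> l"
    define p where "p l' = (if l' \<in> nodes m n then (if \<sigma> l' \<noteq> 0 then \<sigma> l' else if l' = l then - \<tau> l else 0) else 0)" for l'
    have pb: "-1 \<le> p l' \<and> p l' \<le> 1" for l'
    proof -
      have a: "-1 \<le> \<sigma> l' \<and> \<sigma> l' \<le> 1" using s[rule_format, of l'] by auto
      have c: "-1 \<le> - \<tau> l \<and> - \<tau> l \<le> 1" using t[rule_format, of l] by auto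
      show ?thesis unfolding p_def using a c by simp
    qed
    have p0: "l' \<notin> nodes m n \<Longrightarrow> p l' = 0" for l' by (simp add: p_def)
    have p1: "l' \<in> nodes m n \<Longrightarrow> \<sigma> l' \<noteq> 0 \<Longrightarrow> p l' = \<sigma> l'" for l' by (simp add: p_def)
    have "p \<in> cube m n \<sigma>" unfolding cube_mem
    proof (intro conjI allI ballI impI)
      fix l' assume "l' \<notin> nodes m n" then show "p l' = 0" by (rule p0)
    next
      fix l' show "-1 \<le> p l'" using pb[of l'] by simp
    next
      fix l' show "p l' \<le> 1" using pb[of l'] by simp
    next
      fix l' assume "l' \<in> nodes m n" "\<sigma> l' \<noteq> 0" then show "p l' = \<sigma> l'" by (rule p1)
    qed
    then have "p \<in> cube m n \<tau>" using sub by blast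
    then have "\<forall>l \<in> nodes m n. (\<tau> l \<noteq> 0 \<longrightarrow> p l = \<tau> l)" unfolding cube_mem by simp
    then have "p l = \<tau> l" using l tl by simp
    moreover have "p l = \<sigma> l \<or> p l = - \<tau> l" using l by (simp add: p_def)
    ultimately show False using ne tl by auto
  qed
next
  assume h: "\<forall>l\<in>nodes m n. \<tau> l \<noteq> 0 \<longrightarrow> \<sigma> l = \<tau> l"
  show "cube m n \<sigma> \<subseteq> cube m n \<tau>"
  proof
    fix p assume "p \<in> cube m n \<sigma>"
    then have A: "\<forall>l. l \<notin> nodes m n \<longrightarrow> p l = 0" and
      B: "\<forall>l \<in> nodes m n. -1 \<le> p l \<and> p l \<le> 1 \<and> (\<sigma> l \<noteq> 0 \<longrightarrow> p l = \<sigma> l)"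
      unfolding cube_mem by simp_all
    have "\<forall>l \<in> nodes m n. -1 \<le> p l \<and> p l \<le> 1 \<and> (\<tau> l \<noteq> 0 \<longrightarrow> p l = \<tau> l)"
    proof
      fix l assume l: "l \<in> nodes m n"
      then have "-1 \<le> p l \<and> p l \<le> 1 \<and> (\<sigma> l \<noteq> 0 \<longrightarrow> p l = \<sigma> l)" using B by blast
      moreover have "\<tau> l \<noteq> 0 \<longrightarrow> \<sigma> l = \<tau> l" using h l by blast
      ultimately show "-1 \<le> p l \<and> p l \<le> 1 \<and> (\<tau> l \<noteq> 0 \<longrightarrow> p l = \<tau> l)" by auto
    qed
    then show "p \<in> cube m n \<tau>" using A unfolding cube_mem by blast
  qed
qed

lemma cube_inj:
  assumes s: "\<forall>l. \<sigma> l \<in> {-1, 0, 1}" and t: "\<forall>l. \<tau> l \<in> {-1, 0, 1}"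
    and s0: "\<forall>l. l \<notin> nodes m n \<longrightarrow> \<sigma> l = 0" and t0: "\<forall>l. l \<notin> nodes m n \<longrightarrow> \<tau> l = 0"
    and eq: "cube m n \<sigma> = cube m n \<tau>"
  shows "\<sigma> = \<tau>"
proof
  fix l
  have a: "\<forall>l\<in>nodes m n. \<tau> l \<noteq> 0 \<longrightarrow> \<sigma> l = \<tau> l"
    by (rule cube_sub[OF s t, THEN iffD1]) (simp add: eq)
  have b: "\<forall>l\<in>nodes m n. \<sigma> l \<noteq> 0 \<longrightarrow> \<tau> l = \<sigma> l"
    by (rule cube_sub[OF t s, THEN iffD1]) (simp add: eq)
  show "\<sigma> l = \<tau> l"
  proof (cases "l \<in> nodes m n")
    case True
    then have "\<tau> l \<noteq> 0 \<longrightarrow> \<sigma> l = \<tau> l" "\<sigma> l \<noteq> 0 \<longrightarrow> \<tau> l = \<sigma> l" using a b by blast+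
    then show ?thesis by (cases "\<sigma> l = 0") auto
  next
    case False then show ?thesis using s0[rule_format, of l] t0[rule_format, of l] by simp
  qed
qed


context net begin

lemma nodes_eq: "nodes m n = ndset 1 (m + 1)"
  by (auto simp: nodes_def ndset_def)

lemma node_map_eq: "node_map n W b i j x = NM 1 (i, j) x"
  by (simp add: node_map_def NM_def)

lemma sv_vals: "\<forall>l. sv k d x l \<in> {-1, 0, 1}"
  by (auto simp: sv_def sgn_real_def)

lemma sign_seq_SS:
  assumes x: "x \<in> vspace (n 0)"
  shows "sign_seq m n W b (SS 1 (m + 1) (sv 1 (m + 1) x)) = sv 1 (m + 1) x"
proof -
  let ?S = "SS 1 (m + 1) (sv 1 (m + 1) x)"
  have ri: "rel_interior ?S = {y \<in> vspace (n 0). sv 1 (m + 1) y = sv 1 (m + 1) x}"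
    using relint_SS[of x 1 "m + 1"] x by simp
  have "x \<in> rel_interior ?S" using ri x by simp
  then have "(SOME y. y \<in> rel_interior ?S) \<in> rel_interior ?S" by (rule someI[of "\<lambda>y. y \<in> rel_interior ?S" x])
  then have y: "sv 1 (m + 1) (SOME y. y \<in> rel_interior ?S) = sv 1 (m + 1) x" using ri by simp
  have "sign_seq m n W b ?S = sv 1 (m + 1) (SOME y. y \<in> rel_interior ?S)"
    by (auto simp: sign_seq_def sv_def nodes_eq node_map_eq)
  then show ?thesis using y by simp
qed

lemma canon_char:
  "C \<in> canon_complex m n W b \<longleftrightarrow> (\<exists>x\<in>vspace (n 0). C = SS 1 (m + 1) (sv 1 (m + 1) x))"
proof
  assume "C \<in> canon_complex m n W b"
  then have "C \<in> {SS 1 (m + 1) \<tau> |\<tau>. SS 1 (m + 1) \<tau> \<noteq> {}}" unfolding canon_SS .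
  then obtain \<tau> where C: "C = SS 1 (m + 1) \<tau>" "SS 1 (m + 1) \<tau> \<noteq> {}" by blast
  then obtain x where x: "x \<in> SS 1 (m + 1) \<tau>" "SS 1 (m + 1) \<tau> = SS 1 (m + 1) (sv 1 (m + 1) x)"
    using SS_real by blast
  have "x \<in> vspace (n 0)" using x(1) by (simp add: SS_def)
  then show "\<exists>x\<in>vspace (n 0). C = SS 1 (m + 1) (sv 1 (m + 1) x)" using x C by blast
next
  assume "\<exists>x\<in>vspace (n 0). C = SS 1 (m + 1) (sv 1 (m + 1) x)"
  then obtain x where x: "x \<in> vspace (n 0)" "C = SS 1 (m + 1) (sv 1 (m + 1) x)" by blast
  then have "x \<in> C" using SS_self[of x 1 "m + 1"] by simp
  then have "C \<in> {SS 1 (m + 1) \<tau> |\<tau>. SS 1 (m + 1) \<tau> \<noteq> {}}" using x by blast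
  then show "C \<in> canon_complex m n W b" unfolding canon_SS .
qed

lemma cube_dim_sv: "cube_dim m n (sv 1 (m + 1) x) = card (Zs 1 (m + 1) x)"
proof -
  have "{l \<in> nodes m n. sv 1 (m + 1) x l = 0} = Zs 1 (m + 1) x"
    by (auto simp: nodes_eq sv_def Zs_def sgn_0_0)
  then show ?thesis by (simp add: cube_dim_def)
qed

end

theorem theorem20:
  fixes m :: nat and n :: "nat \<Rightarrow> nat"
    and W :: "nat \<Rightarrow> nat \<Rightarrow> nat \<Rightarrow> real" and b :: "nat \<Rightarrow> nat \<Rightarrow> real"
  assumes "m \<ge> 1"
    and "\<forall>i \<le> m. n i \<ge> 1" and "n (m + 1) = 1"
    and "n 1 \<ge> n 0"
    and "generic_net m n W b"
    and "supertransversal m n W b"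
  shows
    \<comment> \<open>S(F) is closed under taking faces\<close>
    "(\<forall>C \<in> canon_complex m n W b. \<forall>\<sigma> \<in> sign_vectors m n.
        cube m n \<sigma> \<subseteq> cube m n (sign_seq m n W b C) \<longrightarrow> cube m n \<sigma> \<in> sign_complex m n W b)
   \<comment> \<open>S(F) is pure n_0-dimensional\<close>
   \<and> (\<forall>C \<in> canon_complex m n W b. cube_dim m n (sign_seq m n W b C) \<le> n 0 \<and>
        (\<exists>C' \<in> canon_complex m n W b. cube m n (sign_seq m n W b C) \<subseteq> cube m n (sign_seq m n W b C')
            \<and> cube_dim m n (sign_seq m n W b C') = n 0))
   \<comment> \<open>C \<mapsto> Q_s(C) is a bijection C(F) -> S(F) sending codimension-k cells to k-cubes\<close>
   \<and> bij_betw (\<lambda>C. cube m n (sign_seq m n W b C)) (canon_complex m n W b) (sign_complex m n W b)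
   \<and> (\<forall>C \<in> canon_complex m n W b. cube_dim m n (sign_seq m n W b C) = n 0 - affdim C)"
proof -
  interpret net n W b .
  have n01: "n 0 \<le> n 1" and gen: "generic_net m n W b" and st: "supertransversal m n W b"
    using assms by auto
  let ?N = "ndset 1 (m + 1)"
  have Sj: "Surj 1 (m + 1)" using Surj_all[OF gen st] by simp
  have P1: "\<forall>C \<in> canon_complex m n W b. \<forall>\<sigma> \<in> sign_vectors m n.
        cube m n \<sigma> \<subseteq> cube m n (sign_seq m n W b C) \<longrightarrow> cube m n \<sigma> \<in> sign_complex m n W b"
  proof (intro ballI impI)
    fix C \<sigma> assume C: "C \<in> canon_complex m n W b" and \<sigma>: "\<sigma> \<in> sign_vectors m n"
      and sub: "cube m n \<sigma> \<subseteq> cube m n (sign_seq m n W b C)"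
    obtain x where x: "x \<in> vspace (n 0)" "C = SS 1 (m + 1) (sv 1 (m + 1) x)" using C canon_char by blast
    have ss: "sign_seq m n W b C = sv 1 (m + 1) x" using sign_seq_SS[OF x(1)] x(2) by simp
    have \<sigma>v: "\<forall>l. \<sigma> l \<in> {-1, 0, 1}" "\<forall>l. l \<notin> nodes m n \<longrightarrow> \<sigma> l = 0"
      using \<sigma> by (auto simp: sign_vectors_def)
    have r: "\<forall>l\<in>nodes m n. sv 1 (m + 1) x l \<noteq> 0 \<longrightarrow> \<sigma> l = sv 1 (m + 1) x l"
      using cube_sub[OF \<sigma>v(1) sv_vals] sub ss by simp
    have ref: "\<forall>l\<in>?N. NM 1 l x \<noteq> 0 \<longrightarrow> \<sigma> l = sgn (NM 1 l x)"
      using r by (auto simp: nodes_eq sv_def sgn_0_0)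
    obtain v where v: "v \<in> vspace (n 0)" "\<forall>l\<in>Zs 1 (m + 1) x. lin 1 l \<sigma> v = \<sigma> l"
      using Sj x(1) ref unfolding Surj_def by (metis diff_self_eq_0)
    have dir: "\<forall>l\<in>?N. NM 1 l x = 0 \<longrightarrow> sgn (lin 1 l \<sigma> v) = \<sigma> l"
    proof (intro ballI impI)
      fix l assume "l \<in> ?N" "NM 1 l x = 0"
      then have "l \<in> Zs 1 (m + 1) x" by (simp add: Zs_def)
      then have "lin 1 l \<sigma> v = \<sigma> l" using bspec[OF v(2)] by blast
      then show "sgn (lin 1 l \<sigma> v) = \<sigma> l" using \<sigma>v(1)[rule_format, of l] by (auto simp: sgn_real_def)
    qed
    obtain e where e: "e > 0" "x + e *\<^sub>R v \<in> vspace (n 0)" "\<forall>l\<in>?N. sgn (NM 1 l (x + e *\<^sub>R v)) = \<sigma> l"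
      using SMALL[of x 1 v "m + 1" \<sigma>] x(1) v(1) ref dir by auto
    let ?x' = "x + e *\<^sub>R v"
    have sveq: "sv 1 (m + 1) ?x' = \<sigma>"
    proof
      fix l show "sv 1 (m + 1) ?x' l = \<sigma> l"
        using e(3) \<sigma>v(2)[rule_format, of l] by (cases "l \<in> ?N") (simp_all add: sv_def nodes_eq)
    qed
    have e1: "sign_seq m n W b (SS 1 (m + 1) (sv 1 (m + 1) ?x')) = \<sigma>"
      using sign_seq_SS[OF e(2), of m] unfolding sveq .
    have C': "SS 1 (m + 1) (sv 1 (m + 1) ?x') \<in> canon_complex m n W b"
      unfolding canon_char using e(2) by blast
    have "cube m n \<sigma> = cube m n (sign_seq m n W b (SS 1 (m + 1) (sv 1 (m + 1) ?x')))" using e1 by simp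
    then show "cube m n \<sigma> \<in> sign_complex m n W b" unfolding sign_complex_def
      using C' by (rule image_eqI)
  qed
  have P2: "\<forall>C \<in> canon_complex m n W b. cube_dim m n (sign_seq m n W b C) \<le> n 0 \<and>
        (\<exists>C' \<in> canon_complex m n W b. cube m n (sign_seq m n W b C) \<subseteq> cube m n (sign_seq m n W b C')
            \<and> cube_dim m n (sign_seq m n W b C') = n 0)"
  proof
    fix C assume C: "C \<in> canon_complex m n W b"
    obtain x where x: "x \<in> vspace (n 0)" "C = SS 1 (m + 1) (sv 1 (m + 1) x)" using C canon_char by blast
    have ss: "sign_seq m n W b C = sv 1 (m + 1) x" using sign_seq_SS[OF x(1)] x(2) by simp
    have le: "cube_dim m n (sign_seq m n W b C) \<le> n 0"
      using ss cube_dim_sv dim_formula[OF gen st x(1)] by simp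
    obtain x' where x': "x' \<in> vspace (n 0)" "\<forall>l\<in>?N. NM 1 l x' \<noteq> 0 \<longrightarrow> sgn (NM 1 l x') = sgn (NM 1 l x)"
      "card (Zs 1 (m + 1) x') = n 0"
      using walk[OF gen st n01] x(1) by blast
    let ?C' = "SS 1 (m + 1) (sv 1 (m + 1) x')"
    have C': "?C' \<in> canon_complex m n W b" unfolding canon_char using x'(1) by blast
    have ss': "sign_seq m n W b ?C' = sv 1 (m + 1) x'" using sign_seq_SS[OF x'(1)] .
    have "\<forall>l\<in>nodes m n. sv 1 (m + 1) x' l \<noteq> 0 \<longrightarrow> sv 1 (m + 1) x l = sv 1 (m + 1) x' l"
      using x'(2) by (auto simp: nodes_eq sv_def sgn_0_0)
    then have "cube m n (sign_seq m n W b C) \<subseteq> cube m n (sign_seq m n W b ?C')"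
      using cube_sub[OF sv_vals sv_vals] ss ss' by simp
    moreover have "cube_dim m n (sign_seq m n W b ?C') = n 0" using ss' cube_dim_sv x'(3) by simp
    ultimately show "cube_dim m n (sign_seq m n W b C) \<le> n 0 \<and>
        (\<exists>C' \<in> canon_complex m n W b. cube m n (sign_seq m n W b C) \<subseteq> cube m n (sign_seq m n W b C')
            \<and> cube_dim m n (sign_seq m n W b C') = n 0)" using le C' by blast
  qed
  have P3: "bij_betw (\<lambda>C. cube m n (sign_seq m n W b C)) (canon_complex m n W b) (sign_complex m n W b)"
    unfolding sign_complex_def
  proof (rule inj_on_imp_bij_betw, rule inj_onI)
    fix C1 C2 assume C1: "C1 \<in> canon_complex m n W b" and C2: "C2 \<in> canon_complex m n W b"
      and eq: "cube m n (sign_seq m n W b C1) = cube m n (sign_seq m n W b C2)"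
    obtain x1 where x1: "x1 \<in> vspace (n 0)" "C1 = SS 1 (m + 1) (sv 1 (m + 1) x1)" using C1 canon_char by blast
    obtain x2 where x2: "x2 \<in> vspace (n 0)" "C2 = SS 1 (m + 1) (sv 1 (m + 1) x2)" using C2 canon_char by blast
    have "cube m n (sv 1 (m + 1) x1) = cube m n (sv 1 (m + 1) x2)"
      using eq sign_seq_SS[OF x1(1)] sign_seq_SS[OF x2(1)] x1(2) x2(2) by simp
    moreover have "\<forall>l. l \<notin> nodes m n \<longrightarrow> sv 1 (m + 1) x l = 0" for x by (simp add: nodes_eq sv_def)
    ultimately have "sv 1 (m + 1) x1 = sv 1 (m + 1) x2"
      using cube_inj[OF sv_vals sv_vals] by blast
    then show "C1 = C2" using x1(2) x2(2) by simp
  qed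
  have P4: "\<forall>C \<in> canon_complex m n W b. cube_dim m n (sign_seq m n W b C) = n 0 - affdim C"
  proof
    fix C assume C: "C \<in> canon_complex m n W b"
    obtain x where x: "x \<in> vspace (n 0)" "C = SS 1 (m + 1) (sv 1 (m + 1) x)" using C canon_char by blast
    have ss: "sign_seq m n W b C = sv 1 (m + 1) x" using sign_seq_SS[OF x(1)] x(2) by simp
    have "affdim C = dim (TT 1 (m + 1) x)"
      using tangent_SS[of x 1 "m + 1"] x by (simp add: affdim_def)
    then show "cube_dim m n (sign_seq m n W b C) = n 0 - affdim C"
      using ss cube_dim_sv dim_formula[OF gen st x(1)] by simp
  qed
  show ?thesis using P1 P2 P3 P4 by blast
qed

end
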